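(* Let $P:\mathbf{R}^{24}\to\mathbf{R}$, $P(X,Y,Z)=\mathrm{Re}((oX\cdot oY)\cdot oZ)$ for $X,Y,Z\in\mathbf{R}^8$. Let $a=(x,y,z)\in S^{23}_1$ (the unit sphere of $\mathbf{R}^{24}$, with $x,y,z\in\mathbf{R}^8$), and set $W=P(a)$, $m=|x|\cdot|y|\cdot|z|$. Then the characteristic polynomial $CH(T)=\det(T\cdot I_{24}-D^2P(a))$ of the Hessian $D^2P(a)$ equals $$CH(T)=(T^3-T+2m)(T^3-T-2m)(T^3-T+2W)^6.$$
   Context: $\mathcal{O}$ denotes the algebra of Cayley octonions: the 8-dimensional real algebra with basis $1,e_1,\dots,e_7$, where $1$ is the unit, $e_i^2=-1$, $e_ie_j=-e_je_i$ for $i\neq j$, and for every $i$ (indices mod 7) $e_ie_{i+1}=e_{i+3}$, $e_{i+1}e_{i+3}=e_i$, $e_{i+3}e_i=e_{i+1}$ (so $e_1e_2=e_4$). For $t=(t_0,\dots,t_7)\in\mathbf{R}^8$, $ot=t_0+t_1e_1+\dots+t_7e_7\in\mathcal{O}$; $\mathrm{Re}$ denotes the coefficient of $1$. *)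

theory Defs
  imports Complex_Main "Jordan_Normal_Form.Char_Poly"
begin

text \<open>Octonions are represented by coefficient functions t :: nat => real, where
  t 0 is the coefficient of 1 and t i the coefficient of e_i (1 <= i <= 7).\<close>

definition onorm7 :: "nat \<Rightarrow> nat" where
  "onorm7 s = ((s + 6) mod 7) + 1"

text \<open>opos i j k holds iff e_i e_j = e_k by the rules e_t e_(t+1) = e_(t+3),
  e_(t+1) e_(t+3) = e_t, e_(t+3) e_t = e_(t+1) (indices mod 7).\<close>
definition opos :: "nat \<Rightarrow> nat \<Rightarrow> nat \<Rightarrow> bool" where
  "opos i j k \<longleftrightarrow> (\<exists>t\<in>{1..7}.
      (i, j, k) = (onorm7 t, onorm7 (t+1), onorm7 (t+3)) \<or>
      (i, j, k) = (onorm7 (t+1), onorm7 (t+3), onorm7 t) \<or>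
      (i, j, k) = (onorm7 (t+3), onorm7 t, onorm7 (t+1)))"

text \<open>Structure constants: e_i e_j = sum_k octc i j k e_k, with e_0 = 1.\<close>
definition octc :: "nat \<Rightarrow> nat \<Rightarrow> nat \<Rightarrow> real" where
  "octc i j k =
    (if i = 0 then (if k = j then 1 else 0)
     else if j = 0 then (if k = i then 1 else 0)
     else if i = j then (if k = 0 then -1 else 0)
     else if opos i j k then 1
     else if opos j i k then -1
     else 0)"

definition omul :: "(nat \<Rightarrow> real) \<Rightarrow> (nat \<Rightarrow> real) \<Rightarrow> (nat \<Rightarrow> real)" where
  "omul p q = (\<lambda>k. \<Sum>i<8. \<Sum>j<8. p i * q j * octc i j k)"

text \<open>Points of R^24 are functions a :: nat => real, only indices 0..23 are relevant;
  a = (x,y,z) with x = a 0..7, y = a 8..15, z = a 16..23.\<close>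
definition xpart :: "(nat \<Rightarrow> real) \<Rightarrow> nat \<Rightarrow> real" where
  "xpart a = (\<lambda>i. if i < 8 then a i else 0)"
definition ypart :: "(nat \<Rightarrow> real) \<Rightarrow> nat \<Rightarrow> real" where
  "ypart a = (\<lambda>i. if i < 8 then a (8 + i) else 0)"
definition zpart :: "(nat \<Rightarrow> real) \<Rightarrow> nat \<Rightarrow> real" where
  "zpart a = (\<lambda>i. if i < 8 then a (16 + i) else 0)"

definition Pcub :: "(nat \<Rightarrow> real) \<Rightarrow> real" where
  "Pcub a = omul (omul (xpart a) (ypart a)) (zpart a) 0"

definition enorm8 :: "(nat \<Rightarrow> real) \<Rightarrow> real" where
  "enorm8 x = sqrt (\<Sum>i<8. (x i)\<^sup>2)"

definition rderiv :: "(real \<Rightarrow> real) \<Rightarrow> real \<Rightarrow> real" where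
  "rderiv f x = (THE D. (f has_real_derivative D) (at x))"

definition hess_entry :: "((nat \<Rightarrow> real) \<Rightarrow> real) \<Rightarrow> (nat \<Rightarrow> real) \<Rightarrow> nat \<Rightarrow> nat \<Rightarrow> real" where
  "hess_entry f a i j =
     rderiv (\<lambda>s. rderiv (\<lambda>t. f (\<lambda>k. a k + (if k = i then s else 0) + (if k = j then t else 0))) 0) 0"

definition hessian :: "nat \<Rightarrow> ((nat \<Rightarrow> real) \<Rightarrow> real) \<Rightarrow> (nat \<Rightarrow> real) \<Rightarrow> real mat" where
  "hessian n f a = mat n n (\<lambda>(i, j). hess_entry f a i j)"

end

theory Submission
  imports Defs
begin


definition om :: "(nat \<Rightarrow> 'a::comm_ring_1) \<Rightarrow> (nat \<Rightarrow> 'a) \<Rightarrow> nat \<Rightarrow> 'a" where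
  "om p q k = (if k = 0 then p 0 * q 0 - p 1 * q 1 - p 2 * q 2 - p 3 * q 3 - p 4 * q 4 - p 5 * q 5 - p 6 * q 6 - p 7 * q 7
   else if k = 1 then p 0 * q 1 + p 1 * q 0 + p 2 * q 4 + p 3 * q 7 - p 4 * q 2 + p 5 * q 6 - p 6 * q 5 - p 7 * q 3
   else if k = 2 then p 0 * q 2 - p 1 * q 4 + p 2 * q 0 + p 3 * q 5 + p 4 * q 1 - p 5 * q 3 + p 6 * q 7 - p 7 * q 6
   else if k = 3 then p 0 * q 3 - p 1 * q 7 - p 2 * q 5 + p 3 * q 0 + p 4 * q 6 + p 5 * q 2 - p 6 * q 4 + p 7 * q 1
   else if k = 4 then p 0 * q 4 + p 1 * q 2 - p 2 * q 1 - p 3 * q 6 + p 4 * q 0 + p 5 * q 7 + p 6 * q 3 - p 7 * q 5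
   else if k = 5 then p 0 * q 5 - p 1 * q 6 + p 2 * q 3 - p 3 * q 2 - p 4 * q 7 + p 5 * q 0 + p 6 * q 1 + p 7 * q 4
   else if k = 6 then p 0 * q 6 + p 1 * q 5 - p 2 * q 7 + p 3 * q 4 - p 4 * q 3 - p 5 * q 1 + p 6 * q 0 + p 7 * q 2
   else if k = 7 then p 0 * q 7 + p 1 * q 3 + p 2 * q 6 - p 3 * q 1 + p 4 * q 5 - p 5 * q 4 - p 6 * q 2 + p 7 * q 0
   else 0)"

definition cj :: "(nat \<Rightarrow> 'a::comm_ring_1) \<Rightarrow> nat \<Rightarrow> 'a" where
  "cj p k = (if k = 0 then p 0 else - p k)"
definition gx :: "(nat \<Rightarrow> 'a::comm_ring_1) \<Rightarrow> nat \<Rightarrow> 'a" where "gx a = (\<lambda>i. if i < 8 then a i else 0)"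
definition gy :: "(nat \<Rightarrow> 'a::comm_ring_1) \<Rightarrow> nat \<Rightarrow> 'a" where "gy a = (\<lambda>i. if i < 8 then a (8 + i) else 0)"
definition gz :: "(nat \<Rightarrow> 'a::comm_ring_1) \<Rightarrow> nat \<Rightarrow> 'a" where "gz a = (\<lambda>i. if i < 8 then a (16 + i) else 0)"
definition blk :: "(nat \<Rightarrow> 'a::comm_ring_1) \<Rightarrow> (nat \<Rightarrow> 'a) \<Rightarrow> (nat \<Rightarrow> 'a) \<Rightarrow> nat \<Rightarrow> 'a" where
  "blk u v w = (\<lambda>i. if i < 8 then u i else if i < 16 then v (i - 8) else if i < 24 then w (i - 16) else 0)"
definition zr :: "nat \<Rightarrow> 'a::comm_ring_1" where "zr = (\<lambda>_. 0)"
definition nsq :: "(nat \<Rightarrow> 'a::comm_ring_1) \<Rightarrow> 'a" where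
  "nsq p = p 0 * p 0 + p 1 * p 1 + p 2 * p 2 + p 3 * p 3 + p 4 * p 4 + p 5 * p 5 + p 6 * p 6 + p 7 * p 7"
definition Hv :: "(nat \<Rightarrow> 'a::comm_ring_1) \<Rightarrow> (nat \<Rightarrow> 'a) \<Rightarrow> nat \<Rightarrow> 'a" where
  "Hv a v = blk (\<lambda>k. cj (om (gy v) (gz a)) k + cj (om (gy a) (gz v)) k)
                (\<lambda>k. cj (om (gz a) (gx v)) k + cj (om (gz v) (gx a)) k)
                (\<lambda>k. cj (om (gx v) (gy a)) k + cj (om (gx a) (gy v)) k)"
definition uk :: "nat \<Rightarrow> nat \<Rightarrow> 'a::comm_ring_1" where "uk k = (\<lambda>i. if i = k then 1 else 0)"
definition c0 :: "(nat \<Rightarrow> 'a::comm_ring_1) \<Rightarrow> nat \<Rightarrow> 'a" where "c0 u = blk u zr zr"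
definition c1 :: "(nat \<Rightarrow> 'a::comm_ring_1) \<Rightarrow> (nat \<Rightarrow> 'a) \<Rightarrow> nat \<Rightarrow> 'a" where
  "c1 a u = blk zr (cj (om (gz a) u)) (cj (om u (gy a)))"
definition c2 :: "(nat \<Rightarrow> 'a::comm_ring_1) \<Rightarrow> (nat \<Rightarrow> 'a) \<Rightarrow> nat \<Rightarrow> 'a" where
  "c2 a u = blk (\<lambda>k. (nsq (gy a) + nsq (gz a)) * u k) (om (cj (gx a)) (om u (gy a))) (om (om (gz a) u) (cj (gx a)))"
definition E1 :: "(nat \<Rightarrow> 'a::comm_ring_1) \<Rightarrow> nat \<Rightarrow> 'a" where "E1 a = blk (gx a) zr zr"
definition E2 :: "(nat \<Rightarrow> 'a::comm_ring_1) \<Rightarrow> nat \<Rightarrow> 'a" where "E2 a = blk zr (gy a) zr"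
definition E3 :: "(nat \<Rightarrow> 'a::comm_ring_1) \<Rightarrow> nat \<Rightarrow> 'a" where "E3 a = blk zr zr (gz a)"
definition S1 :: "(nat \<Rightarrow> 'a::comm_ring_1) \<Rightarrow> nat \<Rightarrow> 'a" where "S1 a = blk (cj (om (gy a) (gz a))) zr zr"
definition S2 :: "(nat \<Rightarrow> 'a::comm_ring_1) \<Rightarrow> nat \<Rightarrow> 'a" where "S2 a = blk zr (cj (om (gz a) (gx a))) zr"
definition S3 :: "(nat \<Rightarrow> 'a::comm_ring_1) \<Rightarrow> nat \<Rightarrow> 'a" where "S3 a = blk zr zr (cj (om (gx a) (gy a)))"
definition rr :: "(nat \<Rightarrow> 'a::comm_ring_1) \<Rightarrow> 'a" where "rr a = nsq (gx a) + nsq (gy a) + nsq (gz a)"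
definition WW :: "(nat \<Rightarrow> 'a::comm_ring_1) \<Rightarrow> 'a" where "WW a = om (om (gx a) (gy a)) (gz a) 0"

lemma lt24: "(i::nat) < 24 \<Longrightarrow> i = 0 \<or> i = 1 \<or> i = 2 \<or> i = 3 \<or> i = 4 \<or> i = 5 \<or> i = 6 \<or> i = 7 \<or> i = 8 \<or> i = 9 \<or> i = 10 \<or> i = 11 \<or> i = 12 \<or> i = 13 \<or> i = 14 \<or> i = 15 \<or> i = 16 \<or> i = 17 \<or> i = 18 \<or> i = 19 \<or> i = 20 \<or> i = 21 \<or> i = 22 \<or> i = 23" by presburger

lemmas odefs = Hv_def c2_def c1_def c0_def E1_def E2_def E3_def S1_def S2_def S3_def rr_def WW_def blk_def zr_def gx_def gy_def gz_def om_def cj_def nsq_def uk_def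

lemma HE1: fixes a :: "nat \<Rightarrow> 'a::comm_ring_1"
  shows "Hv a (E1 a) = (\<lambda>i. S2 a i + S3 a i)"
proof
  fix i :: nat
  show "Hv a (E1 a) i = S2 a i + S3 a i"
  proof (cases "i < 24")
    case True
    then show ?thesis
      apply -
      apply (drule lt24)
      apply (elim disjE)
      apply (simp_all add: odefs)
      apply ((simp_all add: algebra_simps)?)
      done
  next
    case False
    then show ?thesis by (simp add: odefs)
  qed
qed

lemma HE2: fixes a :: "nat \<Rightarrow> 'a::comm_ring_1"
  shows "Hv a (E2 a) = (\<lambda>i. S1 a i + S3 a i)"
proof
  fix i :: nat
  show "Hv a (E2 a) i = S1 a i + S3 a i"
  proof (cases "i < 24")
    case True
    then show ?thesis
      apply -
      apply (drule lt24)
      apply (elim disjE)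
      apply (simp_all add: odefs)
      apply ((simp_all add: algebra_simps)?)
      done
  next
    case False
    then show ?thesis by (simp add: odefs)
  qed
qed

lemma HE3: fixes a :: "nat \<Rightarrow> 'a::comm_ring_1"
  shows "Hv a (E3 a) = (\<lambda>i. S1 a i + S2 a i)"
proof
  fix i :: nat
  show "Hv a (E3 a) i = S1 a i + S2 a i"
  proof (cases "i < 24")
    case True
    then show ?thesis
      apply -
      apply (drule lt24)
      apply (elim disjE)
      apply (simp_all add: odefs)
      apply ((simp_all add: algebra_simps)?)
      done
  next
    case False
    then show ?thesis by (simp add: odefs)
  qed
qed

lemma HS1: fixes a :: "nat \<Rightarrow> 'a::comm_ring_1"
  shows "Hv a (S1 a) = (\<lambda>i. nsq (gz a) * E2 a i + nsq (gy a) * E3 a i)"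
proof
  fix i :: nat
  show "Hv a (S1 a) i = nsq (gz a) * E2 a i + nsq (gy a) * E3 a i"
  proof (cases "i < 24")
    case True
    then show ?thesis
      apply -
      apply (drule lt24)
      apply (elim disjE)
      apply (simp_all add: odefs)
      apply ((simp_all add: algebra_simps)?)
      done
  next
    case False
    then show ?thesis by (simp add: odefs)
  qed
qed

lemma HS2: fixes a :: "nat \<Rightarrow> 'a::comm_ring_1"
  shows "Hv a (S2 a) = (\<lambda>i. nsq (gz a) * E1 a i + nsq (gx a) * E3 a i)"
proof
  fix i :: nat
  show "Hv a (S2 a) i = nsq (gz a) * E1 a i + nsq (gx a) * E3 a i"
  proof (cases "i < 24")
    case True
    then show ?thesis
      apply -
      apply (drule lt24)
      apply (elim disjE)
      apply (simp_all add: odefs)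
      apply ((simp_all add: algebra_simps)?)
      done
  next
    case False
    then show ?thesis by (simp add: odefs)
  qed
qed

lemma HS3: fixes a :: "nat \<Rightarrow> 'a::comm_ring_1"
  shows "Hv a (S3 a) = (\<lambda>i. nsq (gy a) * E1 a i + nsq (gx a) * E2 a i)"
proof
  fix i :: nat
  show "Hv a (S3 a) i = nsq (gy a) * E1 a i + nsq (gx a) * E2 a i"
  proof (cases "i < 24")
    case True
    then show ?thesis
      apply -
      apply (drule lt24)
      apply (elim disjE)
      apply (simp_all add: odefs)
      apply ((simp_all add: algebra_simps)?)
      done
  next
    case False
    then show ?thesis by (simp add: odefs)
  qed
qed

lemma HC0_0: fixes a :: "nat \<Rightarrow> 'a::comm_ring_1"
  shows "Hv a (c0 (uk 0)) = (\<lambda>i. c1 a (uk 0) i)"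
proof
  fix i :: nat
  show "Hv a (c0 (uk 0)) i = c1 a (uk 0) i"
  proof (cases "i < 24")
    case True
    then show ?thesis
      apply -
      apply (drule lt24)
      apply (elim disjE)
      apply (simp_all add: odefs)
      apply ((simp_all add: algebra_simps)?)
      done
  next
    case False
    then show ?thesis by (simp add: odefs)
  qed
qed

lemma HC1_0: fixes a :: "nat \<Rightarrow> 'a::comm_ring_1"
  shows "Hv a (c1 a (uk 0)) = (\<lambda>i. c2 a (uk 0) i)"
proof
  fix i :: nat
  show "Hv a (c1 a (uk 0)) i = c2 a (uk 0) i"
  proof (cases "i < 24")
    case True
    then show ?thesis
      apply -
      apply (drule lt24)
      apply (elim disjE)
      apply (simp_all add: odefs)
      apply ((simp_all add: algebra_simps)?)
      done
  next
    case False
    then show ?thesis by (simp add: odefs)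
  qed
qed

lemma HC2_0: fixes a :: "nat \<Rightarrow> 'a::comm_ring_1"
  shows "Hv a (c2 a (uk 0)) = (\<lambda>i. rr a * c1 a (uk 0) i - 2 * WW a * c0 (uk 0) i + 2 * cj (om (gy a) (gz a)) 0 * E1 a i + 2 * a 0 * S1 a i)"
proof
  fix i :: nat
  show "Hv a (c2 a (uk 0)) i = rr a * c1 a (uk 0) i - 2 * WW a * c0 (uk 0) i + 2 * cj (om (gy a) (gz a)) 0 * E1 a i + 2 * a 0 * S1 a i"
  proof (cases "i < 24")
    case True
    then show ?thesis
      apply -
      apply (drule lt24)
      apply (elim disjE)
      apply (simp_all add: odefs)
      apply ((simp_all add: algebra_simps)?)
      done
  next
    case False
    then show ?thesis by (simp add: odefs)
  qed
qed

lemma HC0_1: fixes a :: "nat \<Rightarrow> 'a::comm_ring_1"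
  shows "Hv a (c0 (uk 1)) = (\<lambda>i. c1 a (uk 1) i)"
proof
  fix i :: nat
  show "Hv a (c0 (uk 1)) i = c1 a (uk 1) i"
  proof (cases "i < 24")
    case True
    then show ?thesis
      apply -
      apply (drule lt24)
      apply (elim disjE)
      apply (simp_all add: odefs)
      apply ((simp_all add: algebra_simps)?)
      done
  next
    case False
    then show ?thesis by (simp add: odefs)
  qed
qed

lemma HC1_1: fixes a :: "nat \<Rightarrow> 'a::comm_ring_1"
  shows "Hv a (c1 a (uk 1)) = (\<lambda>i. c2 a (uk 1) i)"
proof
  fix i :: nat
  show "Hv a (c1 a (uk 1)) i = c2 a (uk 1) i"
  proof (cases "i < 24")
    case True
    then show ?thesis
      apply -
      apply (drule lt24)
      apply (elim disjE)
      apply (simp_all add: odefs)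
      apply ((simp_all add: algebra_simps)?)
      done
  next
    case False
    then show ?thesis by (simp add: odefs)
  qed
qed

lemma HC2_1: fixes a :: "nat \<Rightarrow> 'a::comm_ring_1"
  shows "Hv a (c2 a (uk 1)) = (\<lambda>i. rr a * c1 a (uk 1) i - 2 * WW a * c0 (uk 1) i + 2 * cj (om (gy a) (gz a)) 1 * E1 a i + 2 * a 1 * S1 a i)"
proof
  fix i :: nat
  show "Hv a (c2 a (uk 1)) i = rr a * c1 a (uk 1) i - 2 * WW a * c0 (uk 1) i + 2 * cj (om (gy a) (gz a)) 1 * E1 a i + 2 * a 1 * S1 a i"
  proof (cases "i < 24")
    case True
    then show ?thesis
      apply -
      apply (drule lt24)
      apply (elim disjE)
      apply (simp_all add: odefs)
      apply ((simp_all add: algebra_simps)?)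
      done
  next
    case False
    then show ?thesis by (simp add: odefs)
  qed
qed

lemma HC0_2: fixes a :: "nat \<Rightarrow> 'a::comm_ring_1"
  shows "Hv a (c0 (uk 2)) = (\<lambda>i. c1 a (uk 2) i)"
proof
  fix i :: nat
  show "Hv a (c0 (uk 2)) i = c1 a (uk 2) i"
  proof (cases "i < 24")
    case True
    then show ?thesis
      apply -
      apply (drule lt24)
      apply (elim disjE)
      apply (simp_all add: odefs)
      apply ((simp_all add: algebra_simps)?)
      done
  next
    case False
    then show ?thesis by (simp add: odefs)
  qed
qed

lemma HC1_2: fixes a :: "nat \<Rightarrow> 'a::comm_ring_1"
  shows "Hv a (c1 a (uk 2)) = (\<lambda>i. c2 a (uk 2) i)"
proof
  fix i :: nat
  show "Hv a (c1 a (uk 2)) i = c2 a (uk 2) i"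
  proof (cases "i < 24")
    case True
    then show ?thesis
      apply -
      apply (drule lt24)
      apply (elim disjE)
      apply (simp_all add: odefs)
      apply ((simp_all add: algebra_simps)?)
      done
  next
    case False
    then show ?thesis by (simp add: odefs)
  qed
qed

lemma HC2_2: fixes a :: "nat \<Rightarrow> 'a::comm_ring_1"
  shows "Hv a (c2 a (uk 2)) = (\<lambda>i. rr a * c1 a (uk 2) i - 2 * WW a * c0 (uk 2) i + 2 * cj (om (gy a) (gz a)) 2 * E1 a i + 2 * a 2 * S1 a i)"
proof
  fix i :: nat
  show "Hv a (c2 a (uk 2)) i = rr a * c1 a (uk 2) i - 2 * WW a * c0 (uk 2) i + 2 * cj (om (gy a) (gz a)) 2 * E1 a i + 2 * a 2 * S1 a i"
  proof (cases "i < 24")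
    case True
    then show ?thesis
      apply -
      apply (drule lt24)
      apply (elim disjE)
      apply (simp_all add: odefs)
      apply ((simp_all add: algebra_simps)?)
      done
  next
    case False
    then show ?thesis by (simp add: odefs)
  qed
qed

lemma HC0_3: fixes a :: "nat \<Rightarrow> 'a::comm_ring_1"
  shows "Hv a (c0 (uk 3)) = (\<lambda>i. c1 a (uk 3) i)"
proof
  fix i :: nat
  show "Hv a (c0 (uk 3)) i = c1 a (uk 3) i"
  proof (cases "i < 24")
    case True
    then show ?thesis
      apply -
      apply (drule lt24)
      apply (elim disjE)
      apply (simp_all add: odefs)
      apply ((simp_all add: algebra_simps)?)
      done
  next
    case False
    then show ?thesis by (simp add: odefs)
  qed
qed

lemma HC1_3: fixes a :: "nat \<Rightarrow> 'a::comm_ring_1"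
  shows "Hv a (c1 a (uk 3)) = (\<lambda>i. c2 a (uk 3) i)"
proof
  fix i :: nat
  show "Hv a (c1 a (uk 3)) i = c2 a (uk 3) i"
  proof (cases "i < 24")
    case True
    then show ?thesis
      apply -
      apply (drule lt24)
      apply (elim disjE)
      apply (simp_all add: odefs)
      apply ((simp_all add: algebra_simps)?)
      done
  next
    case False
    then show ?thesis by (simp add: odefs)
  qed
qed

lemma HC2_3: fixes a :: "nat \<Rightarrow> 'a::comm_ring_1"
  shows "Hv a (c2 a (uk 3)) = (\<lambda>i. rr a * c1 a (uk 3) i - 2 * WW a * c0 (uk 3) i + 2 * cj (om (gy a) (gz a)) 3 * E1 a i + 2 * a 3 * S1 a i)"
proof
  fix i :: nat
  show "Hv a (c2 a (uk 3)) i = rr a * c1 a (uk 3) i - 2 * WW a * c0 (uk 3) i + 2 * cj (om (gy a) (gz a)) 3 * E1 a i + 2 * a 3 * S1 a i"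
  proof (cases "i < 24")
    case True
    then show ?thesis
      apply -
      apply (drule lt24)
      apply (elim disjE)
      apply (simp_all add: odefs)
      apply ((simp_all add: algebra_simps)?)
      done
  next
    case False
    then show ?thesis by (simp add: odefs)
  qed
qed

lemma HC0_4: fixes a :: "nat \<Rightarrow> 'a::comm_ring_1"
  shows "Hv a (c0 (uk 4)) = (\<lambda>i. c1 a (uk 4) i)"
proof
  fix i :: nat
  show "Hv a (c0 (uk 4)) i = c1 a (uk 4) i"
  proof (cases "i < 24")
    case True
    then show ?thesis
      apply -
      apply (drule lt24)
      apply (elim disjE)
      apply (simp_all add: odefs)
      apply ((simp_all add: algebra_simps)?)
      done
  next
    case False
    then show ?thesis by (simp add: odefs)
  qed
qed

lemma HC1_4: fixes a :: "nat \<Rightarrow> 'a::comm_ring_1"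
  shows "Hv a (c1 a (uk 4)) = (\<lambda>i. c2 a (uk 4) i)"
proof
  fix i :: nat
  show "Hv a (c1 a (uk 4)) i = c2 a (uk 4) i"
  proof (cases "i < 24")
    case True
    then show ?thesis
      apply -
      apply (drule lt24)
      apply (elim disjE)
      apply (simp_all add: odefs)
      apply ((simp_all add: algebra_simps)?)
      done
  next
    case False
    then show ?thesis by (simp add: odefs)
  qed
qed

lemma HC2_4: fixes a :: "nat \<Rightarrow> 'a::comm_ring_1"
  shows "Hv a (c2 a (uk 4)) = (\<lambda>i. rr a * c1 a (uk 4) i - 2 * WW a * c0 (uk 4) i + 2 * cj (om (gy a) (gz a)) 4 * E1 a i + 2 * a 4 * S1 a i)"
proof
  fix i :: nat
  show "Hv a (c2 a (uk 4)) i = rr a * c1 a (uk 4) i - 2 * WW a * c0 (uk 4) i + 2 * cj (om (gy a) (gz a)) 4 * E1 a i + 2 * a 4 * S1 a i"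
  proof (cases "i < 24")
    case True
    then show ?thesis
      apply -
      apply (drule lt24)
      apply (elim disjE)
      apply (simp_all add: odefs)
      apply ((simp_all add: algebra_simps)?)
      done
  next
    case False
    then show ?thesis by (simp add: odefs)
  qed
qed

lemma HC0_5: fixes a :: "nat \<Rightarrow> 'a::comm_ring_1"
  shows "Hv a (c0 (uk 5)) = (\<lambda>i. c1 a (uk 5) i)"
proof
  fix i :: nat
  show "Hv a (c0 (uk 5)) i = c1 a (uk 5) i"
  proof (cases "i < 24")
    case True
    then show ?thesis
      apply -
      apply (drule lt24)
      apply (elim disjE)
      apply (simp_all add: odefs)
      apply ((simp_all add: algebra_simps)?)
      done
  next
    case False
    then show ?thesis by (simp add: odefs)
  qed
qed

lemma HC1_5: fixes a :: "nat \<Rightarrow> 'a::comm_ring_1"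
  shows "Hv a (c1 a (uk 5)) = (\<lambda>i. c2 a (uk 5) i)"
proof
  fix i :: nat
  show "Hv a (c1 a (uk 5)) i = c2 a (uk 5) i"
  proof (cases "i < 24")
    case True
    then show ?thesis
      apply -
      apply (drule lt24)
      apply (elim disjE)
      apply (simp_all add: odefs)
      apply ((simp_all add: algebra_simps)?)
      done
  next
    case False
    then show ?thesis by (simp add: odefs)
  qed
qed

lemma HC2_5: fixes a :: "nat \<Rightarrow> 'a::comm_ring_1"
  shows "Hv a (c2 a (uk 5)) = (\<lambda>i. rr a * c1 a (uk 5) i - 2 * WW a * c0 (uk 5) i + 2 * cj (om (gy a) (gz a)) 5 * E1 a i + 2 * a 5 * S1 a i)"
proof
  fix i :: nat
  show "Hv a (c2 a (uk 5)) i = rr a * c1 a (uk 5) i - 2 * WW a * c0 (uk 5) i + 2 * cj (om (gy a) (gz a)) 5 * E1 a i + 2 * a 5 * S1 a i"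
  proof (cases "i < 24")
    case True
    then show ?thesis
      apply -
      apply (drule lt24)
      apply (elim disjE)
      apply (simp_all add: odefs)
      apply ((simp_all add: algebra_simps)?)
      done
  next
    case False
    then show ?thesis by (simp add: odefs)
  qed
qed



lemma sum24: "(\<Sum>i = 0..<24. f i) = f 0 + f 1 + f 2 + f 3 + f 4 + f 5 + f 6 + f 7 + f 8 + f 9 + f 10 + f 11 + f 12 + f 13 + f 14 + f 15 + f 16 + f 17 + f 18 + f 19 + f 20 + f 21 + f 22 + f (23::nat)"
  by (simp add: numeral_eq_Suc atLeast0_lessThan_Suc add_ac)

definition Hm :: "(nat \<Rightarrow> 'a::comm_ring_1) \<Rightarrow> 'a mat" where "Hm a = mat 24 24 (\<lambda>(i,j). Hv a (uk j) i)"
definition Qcol :: "(nat \<Rightarrow> 'a::comm_ring_1) \<Rightarrow> nat \<Rightarrow> nat \<Rightarrow> 'a" where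
 "Qcol a j = (if j = 0 then E1 a else if j = 1 then E2 a else if j = 2 then E3 a else if j = 3 then S1 a
   else if j = 4 then S2 a else if j = 5 then S3 a else if (j - 6) mod 3 = 0 then c0 (uk ((j - 6) div 3))
   else if (j - 6) mod 3 = 1 then c1 a (uk ((j - 6) div 3)) else c2 a (uk ((j - 6) div 3)))"
definition Qm :: "(nat \<Rightarrow> 'a::comm_ring_1) \<Rightarrow> 'a mat" where "Qm a = mat 24 24 (\<lambda>(l,j). Qcol a j l)"
definition k6 :: "(nat \<Rightarrow> 'a::comm_ring_1) \<Rightarrow> nat \<Rightarrow> nat \<Rightarrow> 'a" where
 "k6 a i j = (if j = 0 then (if i = 4 \<or> i = 5 then 1 else 0)
   else if j = 1 then (if i = 3 \<or> i = 5 then 1 else 0)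
   else if j = 2 then (if i = 3 \<or> i = 4 then 1 else 0)
   else if j = 3 then (if i = 1 then nsq (gz a) else if i = 2 then nsq (gy a) else 0)
   else if j = 4 then (if i = 0 then nsq (gz a) else if i = 2 then nsq (gx a) else 0)
   else (if i = 0 then nsq (gy a) else if i = 1 then nsq (gx a) else 0))"
definition cmf :: "(nat \<Rightarrow> 'a::comm_ring_1) \<Rightarrow> nat \<Rightarrow> nat \<Rightarrow> 'a" where
 "cmf a i j = (if j = 0 then (if i = 1 then 1 else 0) else if j = 1 then (if i = 2 then 1 else 0)
    else (if i = 0 then - 2 * WW a else if i = 1 then rr a else 0))"
definition kf :: "(nat \<Rightarrow> 'a::comm_ring_1) \<Rightarrow> nat \<Rightarrow> nat \<Rightarrow> 'a" where
 "kf a i j = (if i < 6 \<and> j < 6 then k6 a i j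
   else if i < 6 then (if (j - 6) mod 3 = 2 then (if i = 0 then 2 * cj (om (gy a) (gz a)) ((j - 6) div 3)
        else if i = 3 then 2 * a ((j - 6) div 3) else 0) else 0)
   else if j < 6 then 0
   else if (i - 6) div 3 = (j - 6) div 3 then cmf a ((i - 6) mod 3) ((j - 6) mod 3) else 0)"
definition Km :: "(nat \<Rightarrow> 'a::comm_ring_1) \<Rightarrow> 'a mat" where "Km a = mat 24 24 (\<lambda>(i,j). kf a i j)"

lemma Lin: fixes a v :: "nat \<Rightarrow> 'a::comm_ring_1" assumes "l < 24"
  shows "(\<Sum>i = 0..<24. Hv a (uk i) l * v i) = Hv a v l"
  using lt24[OF assms]
  apply (elim disjE)
  apply (simp_all add: sum24 odefs)
  apply ((simp_all add: algebra_simps)?)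
  done

lemma HQ: fixes a :: "nat \<Rightarrow> 'a::comm_ring_1" shows "Hm a * Qm a = Qm a * Km a"
proof (rule eq_matI)
  fix l j assume l: "l < dim_row (Qm a * Km a)" and j: "j < dim_col (Qm a * Km a)"
  hence l: "l < 24" and j: "j < 24" by (simp_all add: Qm_def Km_def)
  have L: "(Hm a * Qm a) $$ (l,j) = Hv a (Qcol a j) l"
    using l j by (simp add: Hm_def Qm_def scalar_prod_def Lin)
  have R: "(Qm a * Km a) $$ (l,j) = (\<Sum>i = 0..<24. Qcol a i l * kf a i j)"
    using l j by (simp add: Qm_def Km_def scalar_prod_def)
  show "(Hm a * Qm a) $$ (l,j) = (Qm a * Km a) $$ (l,j)"
    unfolding L R using lt24[OF j]
    apply (elim disjE)
    apply (simp_all add: sum24 Qcol_def kf_def k6_def cmf_def HE1 HE2 HE3 HS1 HS2 HS3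
      HC0_0 HC0_1 HC0_2 HC0_3 HC0_4 HC0_5 HC1_0 HC1_1 HC1_2 HC1_3 HC1_4 HC1_5 HC2_0 HC2_1 HC2_2 HC2_3 HC2_4 HC2_5 HC0_1[unfolded One_nat_def] HC1_1[unfolded One_nat_def] HC2_1[unfolded One_nat_def])
    apply ((simp_all add: algebra_simps)?)
    done
qed (simp_all add: Hm_def Qm_def Km_def)



lemma det1: assumes "M \<in> carrier_mat 1 1" shows "det M = M $$ (0,0)"
proof -
  have "det M = (\<Sum>i<1. M $$ (i,0) * cofactor M i 0)" by (rule laplace_expansion_column[OF assms]) auto
  also have "\<dots> = M $$ (0,0) * cofactor M 0 0" by simp
  also have "cofactor M 0 0 = 1" unfolding cofactor_def using assms
    by (subst det_dim_zero) (auto simp: mat_delete_def)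
  finally show ?thesis by simp
qed

lemma det2: assumes "M \<in> carrier_mat 2 2" shows "det M = M $$ (0,0) * M $$ (1,1) - M $$ (1,0) * M $$ (0,1)"
proof -
  have "det M = (\<Sum>i<2. M $$ (i,0) * cofactor M i 0)" by (rule laplace_expansion_column[OF assms]) auto
  also have "\<dots> = M $$ (0,0) * cofactor M 0 0 + M $$ (1,0) * cofactor M 1 0" by (simp add: numeral_eq_Suc lessThan_Suc)
  also have "cofactor M 0 0 = M $$ (1,1)" unfolding cofactor_def using assms
    by (subst det1) (auto simp: mat_delete_def insert_index_def numeral_2_eq_2)
  also have "cofactor M 1 0 = - M $$ (0,1)" unfolding cofactor_def using assms
    by (subst det1) (auto simp: mat_delete_def insert_index_def numeral_2_eq_2)
  finally show ?thesis by simp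
qed

lemma det3: assumes "M \<in> carrier_mat 3 3" shows "det M =
   M $$ (0,0) * (M $$ (1,1) * M $$ (2,2) - M $$ (2,1) * M $$ (1,2))
 - M $$ (1,0) * (M $$ (0,1) * M $$ (2,2) - M $$ (2,1) * M $$ (0,2))
 + M $$ (2,0) * (M $$ (0,1) * M $$ (1,2) - M $$ (1,1) * M $$ (0,2))"
proof -
  have "det M = (\<Sum>i<3. M $$ (i,0) * cofactor M i 0)" by (rule laplace_expansion_column[OF assms]) auto
  also have "\<dots> = M $$ (0,0) * cofactor M 0 0 + M $$ (1,0) * cofactor M 1 0 + M $$ (2,0) * cofactor M 2 0" by (simp add: numeral_eq_Suc lessThan_Suc)
  also have "cofactor M 0 0 = M $$ (1,1) * M $$ (2,2) - M $$ (2,1) * M $$ (1,2)" unfolding cofactor_def using assms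
    by (subst det2) (auto simp: mat_delete_def insert_index_def numeral_2_eq_2)
  also have "cofactor M 1 0 = - (M $$ (0,1) * M $$ (2,2) - M $$ (2,1) * M $$ (0,2))" unfolding cofactor_def using assms
    by (subst det2) (auto simp: mat_delete_def insert_index_def numeral_2_eq_2)
  also have "cofactor M 2 0 = M $$ (0,1) * M $$ (1,2) - M $$ (1,1) * M $$ (0,2)" unfolding cofactor_def using assms
    by (subst det2) (auto simp: mat_delete_def insert_index_def numeral_2_eq_2)
  finally show ?thesis by (simp add: algebra_simps)
qed

definition cmx :: "'a::comm_ring_1 \<Rightarrow> 'a mat \<Rightarrow> 'a mat" where
  "cmx x A = mat (dim_row A) (dim_row A) (\<lambda>(i,j). (if i = j then x else 0) - A $$ (i,j))"

lemma det_split: fixes A :: "'a::idom mat"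
  assumes A: "A \<in> carrier_mat (n+m) (n+m)" and z: "\<And>i j. n \<le> i \<Longrightarrow> i < n + m \<Longrightarrow> j < n \<Longrightarrow> A $$ (i,j) = 0"
  shows "det (cmx x A) = det (cmx x (mat n n (\<lambda>(i,j). A $$ (i,j)))) * det (cmx x (mat m m (\<lambda>(i,j). A $$ (i+n, j+n))))"
proof -
  let ?B = "mat n m (\<lambda>(i,j). - A $$ (i, j+n))"
  have "cmx x A = four_block_mat (cmx x (mat n n (\<lambda>(i,j). A $$ (i,j)))) ?B (0\<^sub>m m n) (cmx x (mat m m (\<lambda>(i,j). A $$ (i+n, j+n))))"
    by (rule eq_matI, insert A z, auto simp: cmx_def)
  then show ?thesis
    by (simp, subst det_four_block_mat_lower_left_zero[of _ n _ m], auto simp: cmx_def)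
qed

lemma lt3: "(i::nat) < 3 \<Longrightarrow> i = 0 \<or> i = 1 \<or> i = 2" by presburger
lemma lt6: "(i::nat) < 6 \<Longrightarrow> i = 0 \<or> i = 1 \<or> i = 2 \<or> i = 3 \<or> i = 4 \<or> i = 5" by presburger
lemma sum3: "(\<Sum>i = 0..<3. f i) = f 0 + f 1 + f (2::nat)"
  by (simp add: numeral_eq_Suc atLeast0_lessThan_Suc add_ac)

lemma detCm: fixes a :: "nat \<Rightarrow> 'a::idom"
  shows "det (cmx x (mat 3 3 (\<lambda>(i,j). cmf a i j))) = x^3 - rr a * x + 2 * WW a"
  by (subst det3) (auto simp: cmx_def cmf_def algebra_simps power3_eq_cube)

definition Dm :: "(nat \<Rightarrow> 'a::comm_ring_1) \<Rightarrow> nat \<Rightarrow> 'a mat" where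
  "Dm a n = mat (3*n) (3*n) (\<lambda>(i,j). if i div 3 = j div 3 then cmf a (i mod 3) (j mod 3) else 0)"

lemma detDm: fixes a :: "nat \<Rightarrow> 'a::idom"
  shows "det (cmx x (Dm a n)) = (x^3 - rr a * x + 2 * WW a)^n"
proof (induction n)
  case 0
  have "cmx x (Dm a 0) \<in> carrier_mat 0 0" by (simp add: cmx_def Dm_def)
  then show ?case by simp
next
  case (Suc n)
  have C: "Dm a (Suc n) \<in> carrier_mat (3 + 3*n) (3 + 3*n)" by (simp add: Dm_def)
  have e1: "mat 3 3 (\<lambda>(i,j). Dm a (Suc n) $$ (i,j)) = mat 3 3 (\<lambda>(i,j). cmf a i j)"
    by (rule eq_matI) (auto simp: Dm_def)
  have e2: "mat (3*n) (3*n) (\<lambda>(i,j). Dm a (Suc n) $$ (i+3,j+3)) = Dm a n"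
    by (rule eq_matI) (auto simp: Dm_def)
  have "det (cmx x (Dm a (Suc n))) = det (cmx x (mat 3 3 (\<lambda>(i,j). Dm a (Suc n) $$ (i,j)))) * det (cmx x (mat (3*n) (3*n) (\<lambda>(i,j). Dm a (Suc n) $$ (i+3,j+3))))"
    by (rule det_split[OF C]) (auto simp: Dm_def)
  also have "\<dots> = (x^3 - rr a * x + 2 * WW a) * (x^3 - rr a * x + 2 * WW a)^n"
    unfolding e1 e2 detCm Suc ..
  finally show ?case by simp
qed

lemma detK6: fixes a :: "nat \<Rightarrow> 'a::idom"
  shows "det (cmx x (mat 6 6 (\<lambda>(i,j). k6 a i j))) = (x^3 - rr a * x)^2 - 4 * (nsq (gx a) * nsq (gy a) * nsq (gz a))"
proof -
  let ?D = "mat 3 3 (\<lambda>(i,j). if i = j then x else (0::'a))"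
  let ?B = "mat 3 3 (\<lambda>(i,j). - k6 a i (j+3))"
  let ?C = "mat 3 3 (\<lambda>(i,j). - k6 a (i+3) j)"
  have e: "cmx x (mat 6 6 (\<lambda>(i,j). k6 a i j)) = four_block_mat ?D ?B ?C ?D"
  proof (rule eq_matI)
    fix i j assume "i < dim_row (four_block_mat ?D ?B ?C ?D)" "j < dim_col (four_block_mat ?D ?B ?C ?D)"
    then have "i < 6" "j < 6" by auto
    then show "cmx x (mat 6 6 (\<lambda>(i,j). k6 a i j)) $$ (i,j) = four_block_mat ?D ?B ?C ?D $$ (i,j)"
      using lt6[of i] lt6[of j] by (auto simp: cmx_def k6_def)
  qed (auto simp: cmx_def)
  have com: "?C * ?D = ?D * ?C"
  proof (rule eq_matI)
    fix i j assume "i < dim_row (?D * ?C)" "j < dim_col (?D * ?C)"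
    then have "i < 3" "j < 3" by auto
    then show "(?C * ?D) $$ (i,j) = (?D * ?C) $$ (i,j)"
      using lt3[of i] lt3[of j] by (auto simp: scalar_prod_def sum3 k6_def)
  qed auto
  have "det (cmx x (mat 6 6 (\<lambda>(i,j). k6 a i j))) = det (?D * ?D - ?B * ?C)"
    unfolding e by (rule det_four_block_mat[OF _ _ _ _ com]) auto
  also have "\<dots> = (x^3 - rr a * x)^2 - 4 * (nsq (gx a) * nsq (gy a) * nsq (gz a))"
    by (subst det3) (auto simp: scalar_prod_def sum3 k6_def rr_def algebra_simps power2_eq_square power3_eq_cube)
  finally show ?thesis .
qed

lemma detK: fixes a :: "nat \<Rightarrow> 'a::idom"
  shows "det (cmx x (Km a)) = ((x^3 - rr a * x)^2 - 4 * (nsq (gx a) * nsq (gy a) * nsq (gz a))) * (x^3 - rr a * x + 2 * WW a)^6"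
proof -
  have C: "Km a \<in> carrier_mat (6 + 18) (6 + 18)" by (simp add: Km_def)
  have e1: "mat 6 6 (\<lambda>(i,j). Km a $$ (i,j)) = mat 6 6 (\<lambda>(i,j). k6 a i j)"
    by (rule eq_matI) (auto simp: Km_def kf_def)
  have e2: "mat 18 18 (\<lambda>(i,j). Km a $$ (i+6,j+6)) = Dm a 6"
    by (rule eq_matI) (auto simp: Km_def kf_def Dm_def)
  have "det (cmx x (Km a)) = det (cmx x (mat 6 6 (\<lambda>(i,j). Km a $$ (i,j)))) * det (cmx x (mat 18 18 (\<lambda>(i,j). Km a $$ (i+6,j+6))))"
    by (rule det_split[OF C]) (auto simp: Km_def kf_def)
  then show ?thesis unfolding e1 e2 detK6 detDm .
qed

lemma cmx_eq: assumes "A \<in> carrier_mat n n" shows "cmx x A = x \<cdot>\<^sub>m 1\<^sub>m n - A"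
  by (rule eq_matI, insert assms, auto simp: cmx_def)

lemma cmx_mult: fixes A :: "'a::comm_ring_1 mat"
  assumes A: "A \<in> carrier_mat n n" and Q: "Q \<in> carrier_mat n n" and K: "K \<in> carrier_mat n n"
  and AQ: "A * Q = Q * K"
  shows "cmx x A * Q = Q * cmx x K"
proof -
  have 1: "cmx x A * Q = (x \<cdot>\<^sub>m 1\<^sub>m n) * Q - A * Q"
    unfolding cmx_eq[OF A] by (rule minus_mult_distrib_mat[OF _ A Q]) auto
  have 2: "(x \<cdot>\<^sub>m 1\<^sub>m n) * Q = x \<cdot>\<^sub>m Q" using Q by (subst mult_smult_assoc_mat[of _ n n]) auto
  have 3: "Q * cmx x K = Q * (x \<cdot>\<^sub>m 1\<^sub>m n) - Q * K"
    unfolding cmx_eq[OF K] by (rule mult_minus_distrib_mat[OF Q _ K]) auto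
  have 4: "Q * (x \<cdot>\<^sub>m 1\<^sub>m n) = x \<cdot>\<^sub>m Q" using Q by (subst mult_smult_distrib[of _ n n]) auto
  show ?thesis unfolding 1 2 3 4 AQ ..
qed

lemma det_cancel: fixes A :: "'a::idom mat"
  assumes A: "A \<in> carrier_mat n n" and Q: "Q \<in> carrier_mat n n" and K: "K \<in> carrier_mat n n"
  and AQ: "A * Q = Q * K" and dQ: "det Q \<noteq> 0"
  shows "det (cmx x A) = det (cmx x K)"
proof -
  have cA: "cmx x A \<in> carrier_mat n n" and cK: "cmx x K \<in> carrier_mat n n" using A K by (auto simp: cmx_def)
  have "det (cmx x A) * det Q = det Q * det (cmx x K)"
    using arg_cong[OF cmx_mult[OF A Q K AQ, of x], of det] det_mult[OF cA Q] det_mult[OF Q cK] by simp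
  with dQ show ?thesis by (simp add: mult.commute)
qed



context comm_ring_hom
begin
lemma hom_om: "hom (om p q k) = om (\<lambda>i. hom (p i)) (\<lambda>i. hom (q i)) k"
  unfolding om_def by (simp add: hom_distribs split: if_split)
lemma hom_cj: "hom (cj p k) = cj (\<lambda>i. hom (p i)) k"
  unfolding cj_def by (simp add: hom_distribs)
lemma hom_gx: "hom (gx a i) = gx (\<lambda>k. hom (a k)) i" unfolding gx_def by simp
lemma hom_gy: "hom (gy a i) = gy (\<lambda>k. hom (a k)) i" unfolding gy_def by simp
lemma hom_gz: "hom (gz a i) = gz (\<lambda>k. hom (a k)) i" unfolding gz_def by simp
lemma hom_blk: "hom (blk u v w i) = blk (\<lambda>k. hom (u k)) (\<lambda>k. hom (v k)) (\<lambda>k. hom (w k)) i"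
  unfolding blk_def by simp
lemma hom_zr: "hom (zr i) = zr i" unfolding zr_def by simp
lemma hom_uk: "hom (uk c i) = uk c i" unfolding uk_def by simp
lemma hom_nsq: "hom (nsq p) = nsq (\<lambda>i. hom (p i))" unfolding nsq_def by (simp add: hom_distribs)
lemmas hom_basic = hom_om hom_cj hom_gx hom_gy hom_gz hom_blk hom_zr hom_uk hom_nsq
lemma hom_Hv: "hom (Hv a v i) = Hv (\<lambda>k. hom (a k)) (\<lambda>k. hom (v k)) i"
  unfolding Hv_def by (simp add: hom_basic hom_distribs)
lemma hom_WW: "hom (WW a) = WW (\<lambda>k. hom (a k))" unfolding WW_def by (simp add: hom_basic)
lemma hom_rr: "hom (rr a) = rr (\<lambda>k. hom (a k))" unfolding rr_def by (simp add: hom_basic hom_distribs)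
lemma hom_Qcol: "hom (Qcol a j l) = Qcol (\<lambda>k. hom (a k)) j l"
  unfolding Qcol_def E1_def E2_def E3_def S1_def S2_def S3_def c0_def c1_def c2_def
  by (simp add: hom_basic hom_distribs split: if_split)
lemma hom_Qm: "map_mat hom (Qm a) = Qm (\<lambda>k. hom (a k))"
  by (rule eq_matI) (auto simp: Qm_def hom_Qcol)
lemma hom_Hm: "map_mat hom (Hm a) = Hm (\<lambda>k. hom (a k))"
  by (rule eq_matI) (auto simp: Hm_def hom_Hv hom_uk)
lemma hom_cmx: assumes "A \<in> carrier_mat n n" shows "map_mat hom (cmx x A) = cmx (hom x) (map_mat hom A)"
  by (rule eq_matI) (insert assms, auto simp: cmx_def hom_distribs)
end

lemma crh: "comm_ring_hom ((\<lambda>p. poly p c) :: 'a::comm_ring_1 poly \<Rightarrow> 'a)"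
  by unfold_locales auto

lemma main_det: fixes a b :: "nat \<Rightarrow> real" assumes dQb: "det (Qm b) \<noteq> 0"
  shows "det (cmx x (Hm a)) = ((x^3 - rr a * x)^2 - 4 * (nsq (gx a) * nsq (gy a) * nsq (gz a))) * (x^3 - rr a * x + 2 * WW a)^6"
proof -
  define ap :: "nat \<Rightarrow> real poly" where "ap = (\<lambda>K. [:a K, b K - a K:])"
  have e0: "(\<lambda>k. poly (ap k) 0) = a" by (auto simp: ap_def)
  have e1: "(\<lambda>k. poly (ap k) 1) = b" by (auto simp: ap_def)
  have dQ: "det (Qm ap) \<noteq> 0"
  proof
    assume "det (Qm ap) = 0"
    then have "poly (det (Qm ap)) 1 = 0" by simp
    moreover have "poly (det (Qm ap)) 1 = det (Qm b)"
      using comm_ring_hom.hom_det[OF crh[of 1], of "Qm ap"] comm_ring_hom.hom_Qm[OF crh[of 1], of ap] e1 by simp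
    ultimately show False using dQb by simp
  qed
  have "det (cmx [:x:] (Hm ap)) = det (cmx [:x:] (Km ap))"
    by (rule det_cancel[OF _ _ _ HQ dQ]) (auto simp: Hm_def Qm_def Km_def)
  also have "\<dots> = (([:x:]^3 - rr ap * [:x:])^2 - 4 * (nsq (gx ap) * nsq (gy ap) * nsq (gz ap))) * ([:x:]^3 - rr ap * [:x:] + 2 * WW ap)^6"
    by (rule detK)
  finally have eq: "det (cmx [:x:] (Hm ap)) = (([:x:]^3 - rr ap * [:x:])^2 - 4 * (nsq (gx ap) * nsq (gy ap) * nsq (gz ap))) * ([:x:]^3 - rr ap * [:x:] + 2 * WW ap)^6" .
  have nn: "poly (nsq (gx ap)) 0 = nsq (gx a)" "poly (nsq (gy ap)) 0 = nsq (gy a)" "poly (nsq (gz ap)) 0 = nsq (gz a)"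
    using comm_ring_hom.hom_nsq[OF crh[of "0::real"]] comm_ring_hom.hom_gx[OF crh[of 0], of ap]
      comm_ring_hom.hom_gy[OF crh[of 0], of ap] comm_ring_hom.hom_gz[OF crh[of 0], of ap] e0 by simp_all
  have HC: "Hm ap \<in> carrier_mat 24 24" by (simp add: Hm_def)
  have mm: "map_mat (\<lambda>p. poly p 0) (cmx [:x:] (Hm ap)) = cmx x (Hm a)"
    using comm_ring_hom.hom_cmx[OF crh[of 0] HC, of "[:x:]"] comm_ring_hom.hom_Hm[OF crh[of 0], of ap] e0 by simp
  have "det (cmx x (Hm a)) = poly (det (cmx [:x:] (Hm ap))) 0"
    using comm_ring_hom.hom_det[OF crh[of 0], of "cmx [:x:] (Hm ap)"] mm by simp
  also have "\<dots> = ((x^3 - rr a * x)^2 - 4 * (nsq (gx a) * nsq (gy a) * nsq (gz a))) * (x^3 - rr a * x + 2 * WW a)^6"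
    unfolding eq using comm_ring_hom.hom_rr[OF crh[of 0], of ap] comm_ring_hom.hom_WW[OF crh[of 0], of ap] nn e0
    by (simp add: hom_distribs mult.commute)
  finally show ?thesis .
qed



lemma ex17: "(\<exists>t\<in>{1..7::nat}. P t) = (P 1 \<or> P 2 \<or> P 3 \<or> P 4 \<or> P 5 \<or> P 6 \<or> P 7)"
proof
  assume "\<exists>t\<in>{1..7::nat}. P t"
  then obtain t where "t \<in> {1..7}" "P t" by blast
  then have "t = 1 \<or> t = 2 \<or> t = 3 \<or> t = 4 \<or> t = 5 \<or> t = 6 \<or> t = 7" by auto
  then show "P 1 \<or> P 2 \<or> P 3 \<or> P 4 \<or> P 5 \<or> P 6 \<or> P 7" using \<open>P t\<close> by blast
qed auto

lemma onorm7_1: "onorm7 1 = 1" by (simp add: onorm7_def)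
lemma onorm7_2: "onorm7 2 = 2" by (simp add: onorm7_def)
lemma onorm7_3: "onorm7 3 = 3" by (simp add: onorm7_def)
lemma onorm7_4: "onorm7 4 = 4" by (simp add: onorm7_def)
lemma onorm7_5: "onorm7 5 = 5" by (simp add: onorm7_def)
lemma onorm7_6: "onorm7 6 = 6" by (simp add: onorm7_def)
lemma onorm7_7: "onorm7 7 = 7" by (simp add: onorm7_def)
lemma onorm7_8: "onorm7 8 = 1" by (simp add: onorm7_def)
lemma onorm7_9: "onorm7 9 = 2" by (simp add: onorm7_def)
lemma onorm7_10: "onorm7 10 = 3" by (simp add: onorm7_def)

lemma opos_iff: "opos i j k \<longleftrightarrow> ((i = 1 \<and> j = 2 \<and> k = 4) \<or> (i = 2 \<and> j = 4 \<and> k = 1) \<or> (i = 4 \<and> j = 1 \<and> k = 2) \<or> (i = 2 \<and> j = 3 \<and> k = 5) \<or> (i = 3 \<and> j = 5 \<and> k = 2) \<or> (i = 5 \<and> j = 2 \<and> k = 3) \<or> (i = 3 \<and> j = 4 \<and> k = 6) \<or> (i = 4 \<and> j = 6 \<and> k = 3) \<or> (i = 6 \<and> j = 3 \<and> k = 4) \<or> (i = 4 \<and> j = 5 \<and> k = 7) \<or> (i = 5 \<and> j = 7 \<and> k = 4) \<or> (i = 7 \<and> j = 4 \<and> k = 5) \<or> (i = 5 \<and> j = 6 \<and> k = 1) \<or> (i = 6 \<and> j = 1 \<and> k = 5) \<or> (i = 1 \<and> j = 5 \<and> k = 6) \<or> (i = 6 \<and> j = 7 \<and> k = 2) \<or>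 (i = 7 \<and> j = 2 \<and> k = 6) \<or> (i = 2 \<and> j = 6 \<and> k = 7) \<or> (i = 7 \<and> j = 1 \<and> k = 3) \<or> (i = 1 \<and> j = 3 \<and> k = 7) \<or> (i = 3 \<and> j = 7 \<and> k = 1))"
  unfolding opos_def ex17 by (simp add: disj_assoc onorm7_def, simp add: numeral_eq_Suc onorm7_1 onorm7_2 onorm7_3 onorm7_4 onorm7_5 onorm7_6 onorm7_7 onorm7_8 onorm7_9 onorm7_10)

lemma octc_0_0: "octc 0 0 k = (if k = 0 then 1 else 0)" by (auto simp: octc_def opos_iff simp del: One_nat_def)
lemma octc_0_1: "octc 0 1 k = (if k = 1 then 1 else 0)" by (auto simp: octc_def opos_iff simp del: One_nat_def)
lemma octc_0_2: "octc 0 2 k = (if k = 2 then 1 else 0)" by (auto simp: octc_def opos_iff simp del: One_nat_def)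
lemma octc_0_3: "octc 0 3 k = (if k = 3 then 1 else 0)" by (auto simp: octc_def opos_iff simp del: One_nat_def)
lemma octc_0_4: "octc 0 4 k = (if k = 4 then 1 else 0)" by (auto simp: octc_def opos_iff simp del: One_nat_def)
lemma octc_0_5: "octc 0 5 k = (if k = 5 then 1 else 0)" by (auto simp: octc_def opos_iff simp del: One_nat_def)
lemma octc_0_6: "octc 0 6 k = (if k = 6 then 1 else 0)" by (auto simp: octc_def opos_iff simp del: One_nat_def)
lemma octc_0_7: "octc 0 7 k = (if k = 7 then 1 else 0)" by (auto simp: octc_def opos_iff simp del: One_nat_def)
lemma octc_1_0: "octc 1 0 k = (if k = 1 then 1 else 0)" by (auto simp: octc_def opos_iff simp del: One_nat_def)
lemma octc_1_1: "octc 1 1 k = (if k = 0 then -1 else 0)" by (auto simp: octc_def opos_iff simp del: One_nat_def)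
lemma octc_1_2: "octc 1 2 k = (if k = 4 then 1 else 0)" by (auto simp: octc_def opos_iff simp del: One_nat_def)
lemma octc_1_3: "octc 1 3 k = (if k = 7 then 1 else 0)" by (auto simp: octc_def opos_iff simp del: One_nat_def)
lemma octc_1_4: "octc 1 4 k = (if k = 2 then -1 else 0)" by (auto simp: octc_def opos_iff simp del: One_nat_def)
lemma octc_1_5: "octc 1 5 k = (if k = 6 then 1 else 0)" by (auto simp: octc_def opos_iff simp del: One_nat_def)
lemma octc_1_6: "octc 1 6 k = (if k = 5 then -1 else 0)" by (auto simp: octc_def opos_iff simp del: One_nat_def)
lemma octc_1_7: "octc 1 7 k = (if k = 3 then -1 else 0)" by (auto simp: octc_def opos_iff simp del: One_nat_def)
lemma octc_2_0: "octc 2 0 k = (if k = 2 then 1 else 0)" by (auto simp: octc_def opos_iff simp del: One_nat_def)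
lemma octc_2_1: "octc 2 1 k = (if k = 4 then -1 else 0)" by (auto simp: octc_def opos_iff simp del: One_nat_def)
lemma octc_2_2: "octc 2 2 k = (if k = 0 then -1 else 0)" by (auto simp: octc_def opos_iff simp del: One_nat_def)
lemma octc_2_3: "octc 2 3 k = (if k = 5 then 1 else 0)" by (auto simp: octc_def opos_iff simp del: One_nat_def)
lemma octc_2_4: "octc 2 4 k = (if k = 1 then 1 else 0)" by (auto simp: octc_def opos_iff simp del: One_nat_def)
lemma octc_2_5: "octc 2 5 k = (if k = 3 then -1 else 0)" by (auto simp: octc_def opos_iff simp del: One_nat_def)
lemma octc_2_6: "octc 2 6 k = (if k = 7 then 1 else 0)" by (auto simp: octc_def opos_iff simp del: One_nat_def)
lemma octc_2_7: "octc 2 7 k = (if k = 6 then -1 else 0)" by (auto simp: octc_def opos_iff simp del: One_nat_def)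
lemma octc_3_0: "octc 3 0 k = (if k = 3 then 1 else 0)" by (auto simp: octc_def opos_iff simp del: One_nat_def)
lemma octc_3_1: "octc 3 1 k = (if k = 7 then -1 else 0)" by (auto simp: octc_def opos_iff simp del: One_nat_def)
lemma octc_3_2: "octc 3 2 k = (if k = 5 then -1 else 0)" by (auto simp: octc_def opos_iff simp del: One_nat_def)
lemma octc_3_3: "octc 3 3 k = (if k = 0 then -1 else 0)" by (auto simp: octc_def opos_iff simp del: One_nat_def)
lemma octc_3_4: "octc 3 4 k = (if k = 6 then 1 else 0)" by (auto simp: octc_def opos_iff simp del: One_nat_def)
lemma octc_3_5: "octc 3 5 k = (if k = 2 then 1 else 0)" by (auto simp: octc_def opos_iff simp del: One_nat_def)
lemma octc_3_6: "octc 3 6 k = (if k = 4 then -1 else 0)" by (auto simp: octc_def opos_iff simp del: One_nat_def)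
lemma octc_3_7: "octc 3 7 k = (if k = 1 then 1 else 0)" by (auto simp: octc_def opos_iff simp del: One_nat_def)
lemma octc_4_0: "octc 4 0 k = (if k = 4 then 1 else 0)" by (auto simp: octc_def opos_iff simp del: One_nat_def)
lemma octc_4_1: "octc 4 1 k = (if k = 2 then 1 else 0)" by (auto simp: octc_def opos_iff simp del: One_nat_def)
lemma octc_4_2: "octc 4 2 k = (if k = 1 then -1 else 0)" by (auto simp: octc_def opos_iff simp del: One_nat_def)
lemma octc_4_3: "octc 4 3 k = (if k = 6 then -1 else 0)" by (auto simp: octc_def opos_iff simp del: One_nat_def)
lemma octc_4_4: "octc 4 4 k = (if k = 0 then -1 else 0)" by (auto simp: octc_def opos_iff simp del: One_nat_def)
lemma octc_4_5: "octc 4 5 k = (if k = 7 then 1 else 0)" by (auto simp: octc_def opos_iff simp del: One_nat_def)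
lemma octc_4_6: "octc 4 6 k = (if k = 3 then 1 else 0)" by (auto simp: octc_def opos_iff simp del: One_nat_def)
lemma octc_4_7: "octc 4 7 k = (if k = 5 then -1 else 0)" by (auto simp: octc_def opos_iff simp del: One_nat_def)
lemma octc_5_0: "octc 5 0 k = (if k = 5 then 1 else 0)" by (auto simp: octc_def opos_iff simp del: One_nat_def)
lemma octc_5_1: "octc 5 1 k = (if k = 6 then -1 else 0)" by (auto simp: octc_def opos_iff simp del: One_nat_def)
lemma octc_5_2: "octc 5 2 k = (if k = 3 then 1 else 0)" by (auto simp: octc_def opos_iff simp del: One_nat_def)
lemma octc_5_3: "octc 5 3 k = (if k = 2 then -1 else 0)" by (auto simp: octc_def opos_iff simp del: One_nat_def)
lemma octc_5_4: "octc 5 4 k = (if k = 7 then -1 else 0)" by (auto simp: octc_def opos_iff simp del: One_nat_def)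
lemma octc_5_5: "octc 5 5 k = (if k = 0 then -1 else 0)" by (auto simp: octc_def opos_iff simp del: One_nat_def)
lemma octc_5_6: "octc 5 6 k = (if k = 1 then 1 else 0)" by (auto simp: octc_def opos_iff simp del: One_nat_def)
lemma octc_5_7: "octc 5 7 k = (if k = 4 then 1 else 0)" by (auto simp: octc_def opos_iff simp del: One_nat_def)
lemma octc_6_0: "octc 6 0 k = (if k = 6 then 1 else 0)" by (auto simp: octc_def opos_iff simp del: One_nat_def)
lemma octc_6_1: "octc 6 1 k = (if k = 5 then 1 else 0)" by (auto simp: octc_def opos_iff simp del: One_nat_def)
lemma octc_6_2: "octc 6 2 k = (if k = 7 then -1 else 0)" by (auto simp: octc_def opos_iff simp del: One_nat_def)
lemma octc_6_3: "octc 6 3 k = (if k = 4 then 1 else 0)" by (auto simp: octc_def opos_iff simp del: One_nat_def)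
lemma octc_6_4: "octc 6 4 k = (if k = 3 then -1 else 0)" by (auto simp: octc_def opos_iff simp del: One_nat_def)
lemma octc_6_5: "octc 6 5 k = (if k = 1 then -1 else 0)" by (auto simp: octc_def opos_iff simp del: One_nat_def)
lemma octc_6_6: "octc 6 6 k = (if k = 0 then -1 else 0)" by (auto simp: octc_def opos_iff simp del: One_nat_def)
lemma octc_6_7: "octc 6 7 k = (if k = 2 then 1 else 0)" by (auto simp: octc_def opos_iff simp del: One_nat_def)
lemma octc_7_0: "octc 7 0 k = (if k = 7 then 1 else 0)" by (auto simp: octc_def opos_iff simp del: One_nat_def)
lemma octc_7_1: "octc 7 1 k = (if k = 3 then 1 else 0)" by (auto simp: octc_def opos_iff simp del: One_nat_def)
lemma octc_7_2: "octc 7 2 k = (if k = 6 then 1 else 0)" by (auto simp: octc_def opos_iff simp del: One_nat_def)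
lemma octc_7_3: "octc 7 3 k = (if k = 1 then -1 else 0)" by (auto simp: octc_def opos_iff simp del: One_nat_def)
lemma octc_7_4: "octc 7 4 k = (if k = 5 then 1 else 0)" by (auto simp: octc_def opos_iff simp del: One_nat_def)
lemma octc_7_5: "octc 7 5 k = (if k = 4 then -1 else 0)" by (auto simp: octc_def opos_iff simp del: One_nat_def)
lemma octc_7_6: "octc 7 6 k = (if k = 2 then -1 else 0)" by (auto simp: octc_def opos_iff simp del: One_nat_def)
lemma octc_7_7: "octc 7 7 k = (if k = 0 then -1 else 0)" by (auto simp: octc_def opos_iff simp del: One_nat_def)
lemmas octc_tab = octc_0_0 octc_0_1 octc_0_2 octc_0_3 octc_0_4 octc_0_5 octc_0_6 octc_0_7 octc_1_0 octc_1_1 octc_1_2 octc_1_3 octc_1_4 octc_1_5 octc_1_6 octc_1_7 octc_2_0 octc_2_1 octc_2_2 octc_2_3 octc_2_4 octc_2_5 octc_2_6 octc_2_7 octc_3_0 octc_3_1 octc_3_2 octc_3_3 octc_3_4 octc_3_5 octc_3_6 octc_3_7 octc_4_0 octc_4_1 octc_4_2 octc_4_3 octc_4_4 octc_4_5 octc_4_6 octc_4_7 octc_5_0 octc_5_1 octc_5_2 octc_5_3 octc_5_4 octc_5_5 octc_5_6 octc_5_7 octc_6_0 octc_6_1 octc_6_2 octc_6_3 octc_6_4 octc_6_5 octc_6_6 octc_6_7 octc_7_0 octc_7_1 octc_7_2 octc_7_3 octc_7_4 octc_7_5 octc_7_6 octc_7_7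

lemma sum8: "(\<Sum>i<8. f i) = f 0 + f 1 + f 2 + f 3 + f 4 + f 5 + f 6 + f (7::nat)"
  by (simp add: numeral_eq_Suc lessThan_Suc add_ac)

lemma lt8: "(k::nat) < 8 \<Longrightarrow> k = 0 \<or> k = 1 \<or> k = 2 \<or> k = 3 \<or> k = 4 \<or> k = 5 \<or> k = 6 \<or> k = 7" by presburger

lemma omul_om: assumes "k < 8" shows "omul p q k = om p q k"
  using lt8[OF assms]
  apply (elim disjE)
  apply (simp_all add: omul_def sum8 octc_tab om_def del: One_nat_def)
  apply ((simp_all add: algebra_simps)?)
  done

lemma om_cong: assumes "\<And>i. i < 8 \<Longrightarrow> p i = p' i" "\<And>i. i < 8 \<Longrightarrow> q i = q' i"
  shows "om p q k = om p' q' k"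
  unfolding om_def using assms by simp

lemma Pcub_WW: "Pcub a = WW a"
proof -
  have x: "xpart a = gx a" "ypart a = gy a" "zpart a = gz a"
    by (auto simp: xpart_def ypart_def zpart_def gx_def gy_def gz_def)
  have "Pcub a = om (omul (gx a) (gy a)) (gz a) 0"
    unfolding Pcub_def x by (rule omul_om) simp
  also have "\<dots> = om (om (gx a) (gy a)) (gz a) 0"
    by (rule om_cong) (simp_all add: omul_om)
  finally show ?thesis unfolding WW_def .
qed

definition G :: "(nat \<Rightarrow> 'a::comm_ring_1) \<Rightarrow> (nat \<Rightarrow> 'a) \<Rightarrow> (nat \<Rightarrow> 'a) \<Rightarrow> 'a" where
  "G p q w = om (om (gx p) (gy q)) (gz w) 0"

lemma WW_G: "WW a = G a a a" unfolding WW_def G_def ..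

lemma G1: "G (\<lambda>k. p k + t * q k) r w = G p r w + t * G q r w"
  by (simp add: G_def om_def gx_def gy_def gz_def algebra_simps)
lemma G2: "G r (\<lambda>k. p k + t * q k) w = G r p w + t * G r q w"
  by (simp add: G_def om_def gx_def gy_def gz_def algebra_simps)
lemma G3: "G r w (\<lambda>k. p k + t * q k) = G r w p + t * G r w q"
  by (simp add: G_def om_def gx_def gy_def gz_def algebra_simps)

lemma D3: "rderiv (\<lambda>t::real. d0 + t * d1 + t^2 * d2 + t^3 * d3) 0 = d1"
proof -
  have d: "((\<lambda>t::real. d0 + t * d1 + t^2 * d2 + t^3 * d3) has_real_derivative d1) (at 0)"
    by (auto intro!: derivative_eq_intros)
  show ?thesis unfolding rderiv_def
  proof (rule the_equality)
    fix D assume "((\<lambda>t::real. d0 + t * d1 + t^2 * d2 + t^3 * d3) has_real_derivative D) (at 0)"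
    then show "D = d1" using d by (rule DERIV_unique)
  qed (rule d)
qed

lemma hessWW: fixes a :: "nat \<Rightarrow> real"
  shows "hess_entry (\<lambda>a. WW a) a I J = G (uk J) (uk I) a + G (uk J) a (uk I) + G (uk I) (uk J) a + G a (uk J) (uk I) + G (uk I) a (uk J) + G a (uk I) (uk J)"
proof -
  have inner: "rderiv (\<lambda>t. WW (\<lambda>k. a k + (if k = I then s else 0) + (if k = J then t else 0))) 0 =
     G (uk J) (\<lambda>k. a k + s * uk I k) (\<lambda>k. a k + s * uk I k) + G (\<lambda>k. a k + s * uk I k) (uk J) (\<lambda>k. a k + s * uk I k)
     + G (\<lambda>k. a k + s * uk I k) (\<lambda>k. a k + s * uk I k) (uk J)" for s
  proof -
    have e: "(\<lambda>t. WW (\<lambda>k. a k + (if k = I then s else 0) + (if k = J then t else 0))) =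
      (\<lambda>t. G (\<lambda>k. a k + s * uk I k) (\<lambda>k. a k + s * uk I k) (\<lambda>k. a k + s * uk I k)
        + t * (G (uk J) (\<lambda>k. a k + s * uk I k) (\<lambda>k. a k + s * uk I k) + G (\<lambda>k. a k + s * uk I k) (uk J) (\<lambda>k. a k + s * uk I k)
     + G (\<lambda>k. a k + s * uk I k) (\<lambda>k. a k + s * uk I k) (uk J))
        + t^2 * (G (uk J) (uk J) (\<lambda>k. a k + s * uk I k) + G (uk J) (\<lambda>k. a k + s * uk I k) (uk J) + G (\<lambda>k. a k + s * uk I k) (uk J) (uk J))
        + t^3 * G (uk J) (uk J) (uk J))"
    proof (rule ext)
      fix t
      have e1: "(\<lambda>k. a k + (if k = I then s else 0) + (if k = J then t else 0)) = (\<lambda>k. a k + s * uk I k + t * uk J k)"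
        by (auto simp: uk_def)
      show "WW (\<lambda>k. a k + (if k = I then s else 0) + (if k = J then t else 0)) = G (\<lambda>k. a k + s * uk I k) (\<lambda>k. a k + s * uk I k) (\<lambda>k. a k + s * uk I k)
        + t * (G (uk J) (\<lambda>k. a k + s * uk I k) (\<lambda>k. a k + s * uk I k) + G (\<lambda>k. a k + s * uk I k) (uk J) (\<lambda>k. a k + s * uk I k)
     + G (\<lambda>k. a k + s * uk I k) (\<lambda>k. a k + s * uk I k) (uk J))
        + t^2 * (G (uk J) (uk J) (\<lambda>k. a k + s * uk I k) + G (uk J) (\<lambda>k. a k + s * uk I k) (uk J) + G (\<lambda>k. a k + s * uk I k) (uk J) (uk J))
        + t^3 * G (uk J) (uk J) (uk J)"
        unfolding e1 WW_G by (simp only: G1 G2 G3) (simp add: algebra_simps power2_eq_square power3_eq_cube)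
    qed
    show ?thesis unfolding e by (rule D3)
  qed
  have e: "(\<lambda>s. rderiv (\<lambda>t. WW (\<lambda>k. a k + (if k = I then s else 0) + (if k = J then t else 0))) 0) =
     (\<lambda>s. (G (uk J) a a + G a (uk J) a + G a a (uk J))
       + s * (G (uk J) (uk I) a + G (uk J) a (uk I) + G (uk I) (uk J) a + G a (uk J) (uk I) + G (uk I) a (uk J) + G a (uk I) (uk J))
       + s^2 * (G (uk J) (uk I) (uk I) + G (uk I) (uk J) (uk I) + G (uk I) (uk I) (uk J)) + s^3 * 0)"
    unfolding inner by (rule ext) (simp only: G1 G2 G3, simp add: algebra_simps power2_eq_square)
  show ?thesis unfolding hess_entry_def e by (rule D3)
qed

lemma Sym_0: fixes a v :: "nat \<Rightarrow> 'a::comm_ring_1"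
  shows "Hv a v 0 = G v (uk 0) a + G v a (uk 0) + G (uk 0) v a + G a v (uk 0) + G (uk 0) a v + G a (uk 0) v"
  by (simp add: G_def odefs algebra_simps)

lemma Sym_1: fixes a v :: "nat \<Rightarrow> 'a::comm_ring_1"
  shows "Hv a v 1 = G v (uk 1) a + G v a (uk 1) + G (uk 1) v a + G a v (uk 1) + G (uk 1) a v + G a (uk 1) v"
  by (simp add: G_def odefs algebra_simps)

lemma Sym_2: fixes a v :: "nat \<Rightarrow> 'a::comm_ring_1"
  shows "Hv a v 2 = G v (uk 2) a + G v a (uk 2) + G (uk 2) v a + G a v (uk 2) + G (uk 2) a v + G a (uk 2) v"
  by (simp add: G_def odefs algebra_simps)

lemma Sym_3: fixes a v :: "nat \<Rightarrow> 'a::comm_ring_1"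
  shows "Hv a v 3 = G v (uk 3) a + G v a (uk 3) + G (uk 3) v a + G a v (uk 3) + G (uk 3) a v + G a (uk 3) v"
  by (simp add: G_def odefs algebra_simps)

lemma Sym_4: fixes a v :: "nat \<Rightarrow> 'a::comm_ring_1"
  shows "Hv a v 4 = G v (uk 4) a + G v a (uk 4) + G (uk 4) v a + G a v (uk 4) + G (uk 4) a v + G a (uk 4) v"
  by (simp add: G_def odefs algebra_simps)

lemma Sym_5: fixes a v :: "nat \<Rightarrow> 'a::comm_ring_1"
  shows "Hv a v 5 = G v (uk 5) a + G v a (uk 5) + G (uk 5) v a + G a v (uk 5) + G (uk 5) a v + G a (uk 5) v"
  by (simp add: G_def odefs algebra_simps)

lemma Sym_6: fixes a v :: "nat \<Rightarrow> 'a::comm_ring_1"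
  shows "Hv a v 6 = G v (uk 6) a + G v a (uk 6) + G (uk 6) v a + G a v (uk 6) + G (uk 6) a v + G a (uk 6) v"
  by (simp add: G_def odefs algebra_simps)

lemma Sym_7: fixes a v :: "nat \<Rightarrow> 'a::comm_ring_1"
  shows "Hv a v 7 = G v (uk 7) a + G v a (uk 7) + G (uk 7) v a + G a v (uk 7) + G (uk 7) a v + G a (uk 7) v"
  by (simp add: G_def odefs algebra_simps)

lemma Sym_8: fixes a v :: "nat \<Rightarrow> 'a::comm_ring_1"
  shows "Hv a v 8 = G v (uk 8) a + G v a (uk 8) + G (uk 8) v a + G a v (uk 8) + G (uk 8) a v + G a (uk 8) v"
  by (simp add: G_def odefs algebra_simps)

lemma Sym_9: fixes a v :: "nat \<Rightarrow> 'a::comm_ring_1"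
  shows "Hv a v 9 = G v (uk 9) a + G v a (uk 9) + G (uk 9) v a + G a v (uk 9) + G (uk 9) a v + G a (uk 9) v"
  by (simp add: G_def odefs algebra_simps)

lemma Sym_10: fixes a v :: "nat \<Rightarrow> 'a::comm_ring_1"
  shows "Hv a v 10 = G v (uk 10) a + G v a (uk 10) + G (uk 10) v a + G a v (uk 10) + G (uk 10) a v + G a (uk 10) v"
  by (simp add: G_def odefs algebra_simps)

lemma Sym_11: fixes a v :: "nat \<Rightarrow> 'a::comm_ring_1"
  shows "Hv a v 11 = G v (uk 11) a + G v a (uk 11) + G (uk 11) v a + G a v (uk 11) + G (uk 11) a v + G a (uk 11) v"
  by (simp add: G_def odefs algebra_simps)

lemma Sym_12: fixes a v :: "nat \<Rightarrow> 'a::comm_ring_1"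
  shows "Hv a v 12 = G v (uk 12) a + G v a (uk 12) + G (uk 12) v a + G a v (uk 12) + G (uk 12) a v + G a (uk 12) v"
  by (simp add: G_def odefs algebra_simps)

lemma Sym_13: fixes a v :: "nat \<Rightarrow> 'a::comm_ring_1"
  shows "Hv a v 13 = G v (uk 13) a + G v a (uk 13) + G (uk 13) v a + G a v (uk 13) + G (uk 13) a v + G a (uk 13) v"
  by (simp add: G_def odefs algebra_simps)

lemma Sym_14: fixes a v :: "nat \<Rightarrow> 'a::comm_ring_1"
  shows "Hv a v 14 = G v (uk 14) a + G v a (uk 14) + G (uk 14) v a + G a v (uk 14) + G (uk 14) a v + G a (uk 14) v"
  by (simp add: G_def odefs algebra_simps)

lemma Sym_15: fixes a v :: "nat \<Rightarrow> 'a::comm_ring_1"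
  shows "Hv a v 15 = G v (uk 15) a + G v a (uk 15) + G (uk 15) v a + G a v (uk 15) + G (uk 15) a v + G a (uk 15) v"
  by (simp add: G_def odefs algebra_simps)

lemma Sym_16: fixes a v :: "nat \<Rightarrow> 'a::comm_ring_1"
  shows "Hv a v 16 = G v (uk 16) a + G v a (uk 16) + G (uk 16) v a + G a v (uk 16) + G (uk 16) a v + G a (uk 16) v"
  by (simp add: G_def odefs algebra_simps)

lemma Sym_17: fixes a v :: "nat \<Rightarrow> 'a::comm_ring_1"
  shows "Hv a v 17 = G v (uk 17) a + G v a (uk 17) + G (uk 17) v a + G a v (uk 17) + G (uk 17) a v + G a (uk 17) v"
  by (simp add: G_def odefs algebra_simps)

lemma Sym_18: fixes a v :: "nat \<Rightarrow> 'a::comm_ring_1"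
  shows "Hv a v 18 = G v (uk 18) a + G v a (uk 18) + G (uk 18) v a + G a v (uk 18) + G (uk 18) a v + G a (uk 18) v"
  by (simp add: G_def odefs algebra_simps)

lemma Sym_19: fixes a v :: "nat \<Rightarrow> 'a::comm_ring_1"
  shows "Hv a v 19 = G v (uk 19) a + G v a (uk 19) + G (uk 19) v a + G a v (uk 19) + G (uk 19) a v + G a (uk 19) v"
  by (simp add: G_def odefs algebra_simps)

lemma Sym_20: fixes a v :: "nat \<Rightarrow> 'a::comm_ring_1"
  shows "Hv a v 20 = G v (uk 20) a + G v a (uk 20) + G (uk 20) v a + G a v (uk 20) + G (uk 20) a v + G a (uk 20) v"
  by (simp add: G_def odefs algebra_simps)

lemma Sym_21: fixes a v :: "nat \<Rightarrow> 'a::comm_ring_1"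
  shows "Hv a v 21 = G v (uk 21) a + G v a (uk 21) + G (uk 21) v a + G a v (uk 21) + G (uk 21) a v + G a (uk 21) v"
  by (simp add: G_def odefs algebra_simps)

lemma Sym_22: fixes a v :: "nat \<Rightarrow> 'a::comm_ring_1"
  shows "Hv a v 22 = G v (uk 22) a + G v a (uk 22) + G (uk 22) v a + G a v (uk 22) + G (uk 22) a v + G a (uk 22) v"
  by (simp add: G_def odefs algebra_simps)

lemma Sym_23: fixes a v :: "nat \<Rightarrow> 'a::comm_ring_1"
  shows "Hv a v 23 = G v (uk 23) a + G v a (uk 23) + G (uk 23) v a + G a v (uk 23) + G (uk 23) a v + G a (uk 23) v"
  by (simp add: G_def odefs algebra_simps)

lemma Sym: fixes a v :: "nat \<Rightarrow> 'a::comm_ring_1" assumes "I < 24"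
  shows "Hv a v I = G v (uk I) a + G v a (uk I) + G (uk I) v a + G a v (uk I) + G (uk I) a v + G a (uk I) v"
  using lt24[OF assms] by (elim disjE) (simp_all only: Sym_0 Sym_1 Sym_2 Sym_3 Sym_4 Sym_5 Sym_6 Sym_7 Sym_8 Sym_9 Sym_10 Sym_11 Sym_12 Sym_13 Sym_14 Sym_15 Sym_16 Sym_17 Sym_18 Sym_19 Sym_20 Sym_21 Sym_22 Sym_23)

lemma hessian_Hm: fixes a :: "nat \<Rightarrow> real" shows "hessian 24 Pcub a = Hm a"
proof -
  have P: "Pcub = (\<lambda>a. WW a)" by (rule ext) (rule Pcub_WW)
  show ?thesis unfolding hessian_def Hm_def P
    by (rule eq_matI) (auto simp: hessWW Sym)
qed



definition b0 :: "nat \<Rightarrow> real" where "b0 = (\<lambda>k. if k = 6 \<or> k = 8 \<or> k = 23 then 1 else 0)"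

lemma qb_0: "Qcol b0 0 i = (if i = 6 then 1 else 0)"
proof (cases "i < 24")
  case True
  then show ?thesis
    apply -
    apply (drule lt24)
    apply (elim disjE)
    apply (simp_all add: Qcol_def odefs b0_def)
    done
qed (simp add: Qcol_def odefs)

lemma qb_1: "Qcol b0 1 i = (if i = 8 then 1 else 0)"
proof (cases "i < 24")
  case True
  then show ?thesis
    apply -
    apply (drule lt24)
    apply (elim disjE)
    apply (simp_all add: Qcol_def odefs b0_def)
    done
qed (simp add: Qcol_def odefs)

lemma qb_2: "Qcol b0 2 i = (if i = 23 then 1 else 0)"
proof (cases "i < 24")
  case True
  then show ?thesis
    apply -
    apply (drule lt24)
    apply (elim disjE)
    apply (simp_all add: Qcol_def odefs b0_def)
    done
qed (simp add: Qcol_def odefs)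

lemma qb_3: "Qcol b0 3 i = (if i = 7 then - 1 else 0)"
proof (cases "i < 24")
  case True
  then show ?thesis
    apply -
    apply (drule lt24)
    apply (elim disjE)
    apply (simp_all add: Qcol_def odefs b0_def)
    done
qed (simp add: Qcol_def odefs)

lemma qb_4: "Qcol b0 4 i = (if i = 10 then 1 else 0)"
proof (cases "i < 24")
  case True
  then show ?thesis
    apply -
    apply (drule lt24)
    apply (elim disjE)
    apply (simp_all add: Qcol_def odefs b0_def)
    done
qed (simp add: Qcol_def odefs)

lemma qb_5: "Qcol b0 5 i = (if i = 22 then - 1 else 0)"
proof (cases "i < 24")
  case True
  then show ?thesis
    apply -
    apply (drule lt24)
    apply (elim disjE)
    apply (simp_all add: Qcol_def odefs b0_def)
    done
qed (simp add: Qcol_def odefs)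

lemma qb_6: "Qcol b0 6 i = (if i = 0 then 1 else 0)"
proof (cases "i < 24")
  case True
  then show ?thesis
    apply -
    apply (drule lt24)
    apply (elim disjE)
    apply (simp_all add: Qcol_def odefs b0_def)
    done
qed (simp add: Qcol_def odefs)

lemma qb_7: "Qcol b0 7 i = (if i = 15 then - 1 else (if i = 16 then 1 else 0))"
proof (cases "i < 24")
  case True
  then show ?thesis
    apply -
    apply (drule lt24)
    apply (elim disjE)
    apply (simp_all add: Qcol_def odefs b0_def)
    done
qed (simp add: Qcol_def odefs)

lemma qb_8: "Qcol b0 8 i = (if i = 0 then 2 else (if i = 14 then - 1 else (if i = 18 then 1 else 0)))"
proof (cases "i < 24")
  case True
  then show ?thesis
    apply -
    apply (drule lt24)
    apply (elim disjE)
    apply (simp_all add: Qcol_def odefs b0_def)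
    done
qed (simp add: Qcol_def odefs)

lemma qb_9: "Qcol b0 9 i = (if i = 1 then 1 else 0)"
proof (cases "i < 24")
  case True
  then show ?thesis
    apply -
    apply (drule lt24)
    apply (elim disjE)
    apply (simp_all add: Qcol_def odefs b0_def)
    done
qed (simp add: Qcol_def odefs)

lemma qb_10: "Qcol b0 10 i = (if i = 11 then - 1 else (if i = 17 then - 1 else 0))"
proof (cases "i < 24")
  case True
  then show ?thesis
    apply -
    apply (drule lt24)
    apply (elim disjE)
    apply (simp_all add: Qcol_def odefs b0_def)
    done
qed (simp add: Qcol_def odefs)

lemma qb_11: "Qcol b0 11 i = (if i = 1 then 2 else (if i = 13 then - 1 else (if i = 20 then 1 else 0)))"
proof (cases "i < 24")
  case True
  then show ?thesis
    apply -
    apply (drule lt24)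
    apply (elim disjE)
    apply (simp_all add: Qcol_def odefs b0_def)
    done
qed (simp add: Qcol_def odefs)

lemma qb_12: "Qcol b0 12 i = (if i = 2 then 1 else 0)"
proof (cases "i < 24")
  case True
  then show ?thesis
    apply -
    apply (drule lt24)
    apply (elim disjE)
    apply (simp_all add: Qcol_def odefs b0_def)
    done
qed (simp add: Qcol_def odefs)

lemma qb_13: "Qcol b0 13 i = (if i = 14 then - 1 else (if i = 18 then - 1 else 0))"
proof (cases "i < 24")
  case True
  then show ?thesis
    apply -
    apply (drule lt24)
    apply (elim disjE)
    apply (simp_all add: Qcol_def odefs b0_def)
    done
qed (simp add: Qcol_def odefs)

lemma qb_14: "Qcol b0 14 i = (if i = 2 then 2 else (if i = 15 then 1 else (if i = 16 then 1 else 0)))"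
proof (cases "i < 24")
  case True
  then show ?thesis
    apply -
    apply (drule lt24)
    apply (elim disjE)
    apply (simp_all add: Qcol_def odefs b0_def)
    done
qed (simp add: Qcol_def odefs)

lemma qb_15: "Qcol b0 15 i = (if i = 3 then 1 else 0)"
proof (cases "i < 24")
  case True
  then show ?thesis
    apply -
    apply (drule lt24)
    apply (elim disjE)
    apply (simp_all add: Qcol_def odefs b0_def)
    done
qed (simp add: Qcol_def odefs)

lemma qb_16: "Qcol b0 16 i = (if i = 9 then 1 else (if i = 19 then - 1 else 0))"
proof (cases "i < 24")
  case True
  then show ?thesis
    apply -
    apply (drule lt24)
    apply (elim disjE)
    apply (simp_all add: Qcol_def odefs b0_def)
    done
qed (simp add: Qcol_def odefs)

lemma qb_17: "Qcol b0 17 i = (if i = 3 then 2 else (if i = 12 then - 1 else (if i = 21 then - 1 else 0)))"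
proof (cases "i < 24")
  case True
  then show ?thesis
    apply -
    apply (drule lt24)
    apply (elim disjE)
    apply (simp_all add: Qcol_def odefs b0_def)
    done
qed (simp add: Qcol_def odefs)

lemma qb_18: "Qcol b0 18 i = (if i = 4 then 1 else 0)"
proof (cases "i < 24")
  case True
  then show ?thesis
    apply -
    apply (drule lt24)
    apply (elim disjE)
    apply (simp_all add: Qcol_def odefs b0_def)
    done
qed (simp add: Qcol_def odefs)

lemma qb_19: "Qcol b0 19 i = (if i = 13 then - 1 else (if i = 20 then - 1 else 0))"
proof (cases "i < 24")
  case True
  then show ?thesis
    apply -
    apply (drule lt24)
    apply (elim disjE)
    apply (simp_all add: Qcol_def odefs b0_def)
    done
qed (simp add: Qcol_def odefs)

lemma qb_20: "Qcol b0 20 i = (if i = 4 then 2 else (if i = 11 then 1 else (if i = 17 then - 1 else 0)))"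
proof (cases "i < 24")
  case True
  then show ?thesis
    apply -
    apply (drule lt24)
    apply (elim disjE)
    apply (simp_all add: Qcol_def odefs b0_def)
    done
qed (simp add: Qcol_def odefs)

lemma qb_21: "Qcol b0 21 i = (if i = 5 then 1 else 0)"
proof (cases "i < 24")
  case True
  then show ?thesis
    apply -
    apply (drule lt24)
    apply (elim disjE)
    apply (simp_all add: Qcol_def odefs b0_def)
    done
qed (simp add: Qcol_def odefs)

lemma qb_22: "Qcol b0 22 i = (if i = 12 then 1 else (if i = 21 then - 1 else 0))"
proof (cases "i < 24")
  case True
  then show ?thesis
    apply -
    apply (drule lt24)
    apply (elim disjE)
    apply (simp_all add: Qcol_def odefs b0_def)
    done
qed (simp add: Qcol_def odefs)

lemma qb_23: "Qcol b0 23 i = (if i = 5 then 2 else (if i = 9 then 1 else (if i = 19 then 1 else 0)))"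
proof (cases "i < 24")
  case True
  then show ?thesis
    apply -
    apply (drule lt24)
    apply (elim disjE)
    apply (simp_all add: Qcol_def odefs b0_def)
    done
qed (simp add: Qcol_def odefs)

lemma detQb0: "det (Qm b0) \<noteq> 0"
proof
  assume "det (Qm b0) = 0"
  then obtain v where v: "v \<in> carrier_vec 24" "v \<noteq> 0\<^sub>v 24" "Qm b0 *\<^sub>v v = 0\<^sub>v 24"
    using det_0_iff_vec_prod_zero[of "Qm b0" 24] by (auto simp: Qm_def)
  have row: "(\<Sum>j = 0..<24. Qcol b0 j i * v $ j) = 0" if "i < 24" for i
  proof -
    have "(Qm b0 *\<^sub>v v) $ i = 0" using v(3) that by simp
    then show ?thesis using that v(1) by (simp add: Qm_def mult_mat_vec_def scalar_prod_def)
  qed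
  have r0: "1 * v $ 6 + 2 * v $ 8 = 0" using row[of 0] by (simp add: sum24 qb_0 qb_1 qb_2 qb_3 qb_4 qb_5 qb_6 qb_7 qb_8 qb_9 qb_10 qb_11 qb_12 qb_13 qb_14 qb_15 qb_16 qb_17 qb_18 qb_19 qb_20 qb_21 qb_22 qb_23 qb_1[unfolded One_nat_def])
  have r1: "1 * v $ 9 + 2 * v $ 11 = 0" using row[of 1] by (simp add: sum24 qb_0 qb_1 qb_2 qb_3 qb_4 qb_5 qb_6 qb_7 qb_8 qb_9 qb_10 qb_11 qb_12 qb_13 qb_14 qb_15 qb_16 qb_17 qb_18 qb_19 qb_20 qb_21 qb_22 qb_23 qb_1[unfolded One_nat_def])
  have r2: "1 * v $ 12 + 2 * v $ 14 = 0" using row[of 2] by (simp add: sum24 qb_0 qb_1 qb_2 qb_3 qb_4 qb_5 qb_6 qb_7 qb_8 qb_9 qb_10 qb_11 qb_12 qb_13 qb_14 qb_15 qb_16 qb_17 qb_18 qb_19 qb_20 qb_21 qb_22 qb_23 qb_1[unfolded One_nat_def])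
  have r3: "1 * v $ 15 + 2 * v $ 17 = 0" using row[of 3] by (simp add: sum24 qb_0 qb_1 qb_2 qb_3 qb_4 qb_5 qb_6 qb_7 qb_8 qb_9 qb_10 qb_11 qb_12 qb_13 qb_14 qb_15 qb_16 qb_17 qb_18 qb_19 qb_20 qb_21 qb_22 qb_23 qb_1[unfolded One_nat_def])
  have r4: "1 * v $ 18 + 2 * v $ 20 = 0" using row[of 4] by (simp add: sum24 qb_0 qb_1 qb_2 qb_3 qb_4 qb_5 qb_6 qb_7 qb_8 qb_9 qb_10 qb_11 qb_12 qb_13 qb_14 qb_15 qb_16 qb_17 qb_18 qb_19 qb_20 qb_21 qb_22 qb_23 qb_1[unfolded One_nat_def])
  have r5: "1 * v $ 21 + 2 * v $ 23 = 0" using row[of 5] by (simp add: sum24 qb_0 qb_1 qb_2 qb_3 qb_4 qb_5 qb_6 qb_7 qb_8 qb_9 qb_10 qb_11 qb_12 qb_13 qb_14 qb_15 qb_16 qb_17 qb_18 qb_19 qb_20 qb_21 qb_22 qb_23 qb_1[unfolded One_nat_def])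
  have r6: "1 * v $ 0 = 0" using row[of 6] by (simp add: sum24 qb_0 qb_1 qb_2 qb_3 qb_4 qb_5 qb_6 qb_7 qb_8 qb_9 qb_10 qb_11 qb_12 qb_13 qb_14 qb_15 qb_16 qb_17 qb_18 qb_19 qb_20 qb_21 qb_22 qb_23 qb_1[unfolded One_nat_def])
  have r7: "-1 * v $ 3 = 0" using row[of 7] by (simp add: sum24 qb_0 qb_1 qb_2 qb_3 qb_4 qb_5 qb_6 qb_7 qb_8 qb_9 qb_10 qb_11 qb_12 qb_13 qb_14 qb_15 qb_16 qb_17 qb_18 qb_19 qb_20 qb_21 qb_22 qb_23 qb_1[unfolded One_nat_def])
  have r8: "1 * v $ 1 = 0" using row[of 8] by (simp add: sum24 qb_0 qb_1 qb_2 qb_3 qb_4 qb_5 qb_6 qb_7 qb_8 qb_9 qb_10 qb_11 qb_12 qb_13 qb_14 qb_15 qb_16 qb_17 qb_18 qb_19 qb_20 qb_21 qb_22 qb_23 qb_1[unfolded One_nat_def])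
  have r9: "1 * v $ 16 + 1 * v $ 23 = 0" using row[of 9] by (simp add: sum24 qb_0 qb_1 qb_2 qb_3 qb_4 qb_5 qb_6 qb_7 qb_8 qb_9 qb_10 qb_11 qb_12 qb_13 qb_14 qb_15 qb_16 qb_17 qb_18 qb_19 qb_20 qb_21 qb_22 qb_23 qb_1[unfolded One_nat_def])
  have r10: "1 * v $ 4 = 0" using row[of 10] by (simp add: sum24 qb_0 qb_1 qb_2 qb_3 qb_4 qb_5 qb_6 qb_7 qb_8 qb_9 qb_10 qb_11 qb_12 qb_13 qb_14 qb_15 qb_16 qb_17 qb_18 qb_19 qb_20 qb_21 qb_22 qb_23 qb_1[unfolded One_nat_def])
  have r11: "-1 * v $ 10 + 1 * v $ 20 = 0" using row[of 11] by (simp add: sum24 qb_0 qb_1 qb_2 qb_3 qb_4 qb_5 qb_6 qb_7 qb_8 qb_9 qb_10 qb_11 qb_12 qb_13 qb_14 qb_15 qb_16 qb_17 qb_18 qb_19 qb_20 qb_21 qb_22 qb_23 qb_1[unfolded One_nat_def])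
  have r12: "-1 * v $ 17 + 1 * v $ 22 = 0" using row[of 12] by (simp add: sum24 qb_0 qb_1 qb_2 qb_3 qb_4 qb_5 qb_6 qb_7 qb_8 qb_9 qb_10 qb_11 qb_12 qb_13 qb_14 qb_15 qb_16 qb_17 qb_18 qb_19 qb_20 qb_21 qb_22 qb_23 qb_1[unfolded One_nat_def])
  have r13: "-1 * v $ 11 + -1 * v $ 19 = 0" using row[of 13] by (simp add: sum24 qb_0 qb_1 qb_2 qb_3 qb_4 qb_5 qb_6 qb_7 qb_8 qb_9 qb_10 qb_11 qb_12 qb_13 qb_14 qb_15 qb_16 qb_17 qb_18 qb_19 qb_20 qb_21 qb_22 qb_23 qb_1[unfolded One_nat_def])
  have r14: "-1 * v $ 8 + -1 * v $ 13 = 0" using row[of 14] by (simp add: sum24 qb_0 qb_1 qb_2 qb_3 qb_4 qb_5 qb_6 qb_7 qb_8 qb_9 qb_10 qb_11 qb_12 qb_13 qb_14 qb_15 qb_16 qb_17 qb_18 qb_19 qb_20 qb_21 qb_22 qb_23 qb_1[unfolded One_nat_def])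
  have r15: "-1 * v $ 7 + 1 * v $ 14 = 0" using row[of 15] by (simp add: sum24 qb_0 qb_1 qb_2 qb_3 qb_4 qb_5 qb_6 qb_7 qb_8 qb_9 qb_10 qb_11 qb_12 qb_13 qb_14 qb_15 qb_16 qb_17 qb_18 qb_19 qb_20 qb_21 qb_22 qb_23 qb_1[unfolded One_nat_def])
  have r16: "1 * v $ 7 + 1 * v $ 14 = 0" using row[of 16] by (simp add: sum24 qb_0 qb_1 qb_2 qb_3 qb_4 qb_5 qb_6 qb_7 qb_8 qb_9 qb_10 qb_11 qb_12 qb_13 qb_14 qb_15 qb_16 qb_17 qb_18 qb_19 qb_20 qb_21 qb_22 qb_23 qb_1[unfolded One_nat_def])
  have r17: "-1 * v $ 10 + -1 * v $ 20 = 0" using row[of 17] by (simp add: sum24 qb_0 qb_1 qb_2 qb_3 qb_4 qb_5 qb_6 qb_7 qb_8 qb_9 qb_10 qb_11 qb_12 qb_13 qb_14 qb_15 qb_16 qb_17 qb_18 qb_19 qb_20 qb_21 qb_22 qb_23 qb_1[unfolded One_nat_def])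
  have r18: "1 * v $ 8 + -1 * v $ 13 = 0" using row[of 18] by (simp add: sum24 qb_0 qb_1 qb_2 qb_3 qb_4 qb_5 qb_6 qb_7 qb_8 qb_9 qb_10 qb_11 qb_12 qb_13 qb_14 qb_15 qb_16 qb_17 qb_18 qb_19 qb_20 qb_21 qb_22 qb_23 qb_1[unfolded One_nat_def])
  have r19: "-1 * v $ 16 + 1 * v $ 23 = 0" using row[of 19] by (simp add: sum24 qb_0 qb_1 qb_2 qb_3 qb_4 qb_5 qb_6 qb_7 qb_8 qb_9 qb_10 qb_11 qb_12 qb_13 qb_14 qb_15 qb_16 qb_17 qb_18 qb_19 qb_20 qb_21 qb_22 qb_23 qb_1[unfolded One_nat_def])
  have r20: "1 * v $ 11 + -1 * v $ 19 = 0" using row[of 20] by (simp add: sum24 qb_0 qb_1 qb_2 qb_3 qb_4 qb_5 qb_6 qb_7 qb_8 qb_9 qb_10 qb_11 qb_12 qb_13 qb_14 qb_15 qb_16 qb_17 qb_18 qb_19 qb_20 qb_21 qb_22 qb_23 qb_1[unfolded One_nat_def])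
  have r21: "-1 * v $ 17 + -1 * v $ 22 = 0" using row[of 21] by (simp add: sum24 qb_0 qb_1 qb_2 qb_3 qb_4 qb_5 qb_6 qb_7 qb_8 qb_9 qb_10 qb_11 qb_12 qb_13 qb_14 qb_15 qb_16 qb_17 qb_18 qb_19 qb_20 qb_21 qb_22 qb_23 qb_1[unfolded One_nat_def])
  have r22: "-1 * v $ 5 = 0" using row[of 22] by (simp add: sum24 qb_0 qb_1 qb_2 qb_3 qb_4 qb_5 qb_6 qb_7 qb_8 qb_9 qb_10 qb_11 qb_12 qb_13 qb_14 qb_15 qb_16 qb_17 qb_18 qb_19 qb_20 qb_21 qb_22 qb_23 qb_1[unfolded One_nat_def])
  have r23: "1 * v $ 2 = 0" using row[of 23] by (simp add: sum24 qb_0 qb_1 qb_2 qb_3 qb_4 qb_5 qb_6 qb_7 qb_8 qb_9 qb_10 qb_11 qb_12 qb_13 qb_14 qb_15 qb_16 qb_17 qb_18 qb_19 qb_20 qb_21 qb_22 qb_23 qb_1[unfolded One_nat_def])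
  have z0: "v $ 0 = 0" using r0 r1 r2 r3 r4 r5 r6 r7 r8 r9 r10 r11 r12 r13 r14 r15 r16 r17 r18 r19 r20 r21 r22 r23 by linarith
  have z1: "v $ 1 = 0" using r0 r1 r2 r3 r4 r5 r6 r7 r8 r9 r10 r11 r12 r13 r14 r15 r16 r17 r18 r19 r20 r21 r22 r23 by linarith
  have z2: "v $ 2 = 0" using r0 r1 r2 r3 r4 r5 r6 r7 r8 r9 r10 r11 r12 r13 r14 r15 r16 r17 r18 r19 r20 r21 r22 r23 by linarith
  have z3: "v $ 3 = 0" using r0 r1 r2 r3 r4 r5 r6 r7 r8 r9 r10 r11 r12 r13 r14 r15 r16 r17 r18 r19 r20 r21 r22 r23 by linarith
  have z4: "v $ 4 = 0" using r0 r1 r2 r3 r4 r5 r6 r7 r8 r9 r10 r11 r12 r13 r14 r15 r16 r17 r18 r19 r20 r21 r22 r23 by linarith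
  have z5: "v $ 5 = 0" using r0 r1 r2 r3 r4 r5 r6 r7 r8 r9 r10 r11 r12 r13 r14 r15 r16 r17 r18 r19 r20 r21 r22 r23 by linarith
  have z6: "v $ 6 = 0" using r0 r1 r2 r3 r4 r5 r6 r7 r8 r9 r10 r11 r12 r13 r14 r15 r16 r17 r18 r19 r20 r21 r22 r23 by linarith
  have z7: "v $ 7 = 0" using r0 r1 r2 r3 r4 r5 r6 r7 r8 r9 r10 r11 r12 r13 r14 r15 r16 r17 r18 r19 r20 r21 r22 r23 by linarith
  have z8: "v $ 8 = 0" using r0 r1 r2 r3 r4 r5 r6 r7 r8 r9 r10 r11 r12 r13 r14 r15 r16 r17 r18 r19 r20 r21 r22 r23 by linarith
  have z9: "v $ 9 = 0" using r0 r1 r2 r3 r4 r5 r6 r7 r8 r9 r10 r11 r12 r13 r14 r15 r16 r17 r18 r19 r20 r21 r22 r23 by linarith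
  have z10: "v $ 10 = 0" using r0 r1 r2 r3 r4 r5 r6 r7 r8 r9 r10 r11 r12 r13 r14 r15 r16 r17 r18 r19 r20 r21 r22 r23 by linarith
  have z11: "v $ 11 = 0" using r0 r1 r2 r3 r4 r5 r6 r7 r8 r9 r10 r11 r12 r13 r14 r15 r16 r17 r18 r19 r20 r21 r22 r23 by linarith
  have z12: "v $ 12 = 0" using r0 r1 r2 r3 r4 r5 r6 r7 r8 r9 r10 r11 r12 r13 r14 r15 r16 r17 r18 r19 r20 r21 r22 r23 by linarith
  have z13: "v $ 13 = 0" using r0 r1 r2 r3 r4 r5 r6 r7 r8 r9 r10 r11 r12 r13 r14 r15 r16 r17 r18 r19 r20 r21 r22 r23 by linarith
  have z14: "v $ 14 = 0" using r0 r1 r2 r3 r4 r5 r6 r7 r8 r9 r10 r11 r12 r13 r14 r15 r16 r17 r18 r19 r20 r21 r22 r23 by linarith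
  have z15: "v $ 15 = 0" using r0 r1 r2 r3 r4 r5 r6 r7 r8 r9 r10 r11 r12 r13 r14 r15 r16 r17 r18 r19 r20 r21 r22 r23 by linarith
  have z16: "v $ 16 = 0" using r0 r1 r2 r3 r4 r5 r6 r7 r8 r9 r10 r11 r12 r13 r14 r15 r16 r17 r18 r19 r20 r21 r22 r23 by linarith
  have z17: "v $ 17 = 0" using r0 r1 r2 r3 r4 r5 r6 r7 r8 r9 r10 r11 r12 r13 r14 r15 r16 r17 r18 r19 r20 r21 r22 r23 by linarith
  have z18: "v $ 18 = 0" using r0 r1 r2 r3 r4 r5 r6 r7 r8 r9 r10 r11 r12 r13 r14 r15 r16 r17 r18 r19 r20 r21 r22 r23 by linarith
  have z19: "v $ 19 = 0" using r0 r1 r2 r3 r4 r5 r6 r7 r8 r9 r10 r11 r12 r13 r14 r15 r16 r17 r18 r19 r20 r21 r22 r23 by linarith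
  have z20: "v $ 20 = 0" using r0 r1 r2 r3 r4 r5 r6 r7 r8 r9 r10 r11 r12 r13 r14 r15 r16 r17 r18 r19 r20 r21 r22 r23 by linarith
  have z21: "v $ 21 = 0" using r0 r1 r2 r3 r4 r5 r6 r7 r8 r9 r10 r11 r12 r13 r14 r15 r16 r17 r18 r19 r20 r21 r22 r23 by linarith
  have z22: "v $ 22 = 0" using r0 r1 r2 r3 r4 r5 r6 r7 r8 r9 r10 r11 r12 r13 r14 r15 r16 r17 r18 r19 r20 r21 r22 r23 by linarith
  have z23: "v $ 23 = 0" using r0 r1 r2 r3 r4 r5 r6 r7 r8 r9 r10 r11 r12 r13 r14 r15 r16 r17 r18 r19 r20 r21 r22 r23 by linarith
  note all = z0 z1 z2 z3 z4 z5 z6 z7 z8 z9 z10 z11 z12 z13 z14 z15 z16 z17 z18 z19 z20 z21 z22 z23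
  have "v = 0\<^sub>v 24"
  proof (rule eq_vecI)
    fix i assume "i < dim_vec (0\<^sub>v 24 :: real vec)"
    then have "i < 24" by simp
    then show "v $ i = 0\<^sub>v 24 $ i" using lt24[OF \<open>i < 24\<close>] all by auto
  qed (use v(1) in simp)
  with v(2) show False by simp
qed

lemma cp_eval: fixes A :: "'a::comm_ring_1 mat" assumes "A \<in> carrier_mat n n"
  shows "poly (char_poly A) x = det (cmx x A)"
proof -
  have "map_mat (\<lambda>p. poly p x) (char_poly_matrix A) = cmx x A"
    by (rule eq_matI, insert assms, auto simp: char_poly_matrix_def cmx_def)
  then show ?thesis unfolding char_poly_def using comm_ring_hom.hom_det[OF crh[of x], of "char_poly_matrix A"] by simp
qed

lemma sum24': "(\<Sum>i<24. f i) = f 0 + f 1 + f 2 + f 3 + f 4 + f 5 + f 6 + f 7 + f 8 + f 9 + f 10 + f 11 + f 12 + f 13 + f 14 + f 15 + f 16 + f 17 + f 18 + f 19 + f 20 + f 21 + f 22 + f (23::nat)"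
  by (simp add: numeral_eq_Suc lessThan_Suc add_ac)

lemma nsq_nonneg: fixes p :: "nat \<Rightarrow> real" shows "0 \<le> nsq p"
  unfolding nsq_def by (intro add_nonneg_nonneg) simp_all

theorem proposition3p1:
  fixes a :: "nat \<Rightarrow> real"
  assumes "(\<Sum>i<24. (a i)\<^sup>2) = 1"
  defines "W \<equiv> Pcub a"
    and "m \<equiv> enorm8 (xpart a) * enorm8 (ypart a) * enorm8 (zpart a)"
  shows "char_poly (hessian 24 Pcub a) =
           [:2 * m, -1, 0, 1:] * [:- 2 * m, -1, 0, 1:] * [:2 * W, -1, 0, 1:] ^ 6"
proof -
  have r1: "rr a = 1" using assms(1)
    by (simp add: rr_def nsq_def gx_def gy_def gz_def sum24' power2_eq_square add_ac)
  have W: "WW a = W" unfolding W_def by (simp add: Pcub_WW)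
  have en: "enorm8 (xpart a) = sqrt (nsq (gx a))" "enorm8 (ypart a) = sqrt (nsq (gy a))" "enorm8 (zpart a) = sqrt (nsq (gz a))"
    by (simp_all add: enorm8_def sum8 nsq_def xpart_def ypart_def zpart_def gx_def gy_def gz_def power2_eq_square)
  have m2: "m^2 = nsq (gx a) * nsq (gy a) * nsq (gz a)"
    unfolding m_def en by (simp add: power_mult_distrib nsq_nonneg)
  have fac: "(x^3 - x)^2 - 4 * (nsq (gx a) * nsq (gy a) * nsq (gz a)) = (2 * m + x * (- 1 + x * x)) * (- 2 * m + x * (- 1 + x * x))" for x :: real
    unfolding m2[symmetric] by (simp add: algebra_simps power2_eq_square power3_eq_cube)
  show ?thesis
    unfolding hessian_Hm
  proof (rule poly_eq_poly_eq_iff[THEN iffD1], rule ext)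
    fix x :: real
    have "poly (char_poly (Hm a)) x = det (cmx x (Hm a))" by (rule cp_eval[of _ 24]) (simp add: Hm_def)
    also have "\<dots> = ((x^3 - rr a * x)^2 - 4 * (nsq (gx a) * nsq (gy a) * nsq (gz a))) * (x^3 - rr a * x + 2 * WW a)^6"
      by (rule main_det[OF detQb0])
    also have "\<dots> = ((x^3 - x)^2 - 4 * m^2) * (x^3 - x + 2 * W)^6"
      unfolding r1 W m2 by simp
    also have "\<dots> = poly ([:2 * m, -1, 0, 1:] * [:- 2 * m, -1, 0, 1:] * [:2 * W, -1, 0, 1:] ^ 6) x"
      by (simp add: power3_eq_cube power2_eq_square algebra_simps)
    finally show "poly (char_poly (Hm a)) x = poly ([:2 * m, -1, 0, 1:] * [:- 2 * m, -1, 0, 1:] * [:2 * W, -1, 0, 1:] ^ 6) x" .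
  qed
qed


end
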